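(* Let $\pi=\langle t,a,b\mid t^{-1}at=a^2,\ t^{-1}b^2t=b\rangle$ and let $\phi\colon\pi\to\mathbb{Z}$ be the epimorphism with $\phi(t)=1$ and $\phi(a)=\phi(b)=0$ (a generator of $H^1(\pi;\mathbb{Z})\cong\mathbb{Z}$). Then $\operatorname{rg}(\pi,\phi)=0$, but $\pi$ cannot be written as an ascending or descending HNN extension of a finitely generated group compatible with $\phi$ (i.e. as $\langle B,t'\mid t'^{-1}A_+t'=A_-\rangle$ with $B$ finitely generated, $A_+=B$ or $A_-=B$, $\phi(t')=1$ and $\phi(B)=0$).
   Context: For a group $H$, $\operatorname{rk}(H)$ is the minimal number of generators. For finitely generated $G$ and a surjective homomorphism $\phi\colon G\to\mathbb{Z}$, with $G_i=\operatorname{Ker}(G\xrightarrow{\phi}\mathbb{Z}\to\mathbb{Z}/i)$, the rank gradient is $\operatorname{rg}(G,\phi)=\liminf_{i\to\infty}\frac{\operatorname{rk}(G_i)}{[G:G_i]}$. An HNN extension $\langle B,t\mid t^{-1}A_+t=A_-\rangle$ with $A_\pm\leq B$ is ascending if $A_+=B$ and descending if $A_-=B$. *)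

theory Defs
  imports "HOL-Algebra.Algebra" "HOL-Library.Extended_Real" "HOL-Library.Liminf_Limsup"
begin

text \<open>Words over a generating type: (x, True) stands for x, (x, False) for x^-1.
  Two words are equivalent iff they are equal in the group with generators 'g and
  relators R, i.e. modulo the congruence generated by free cancellation and the relators
  (the normal closure of R in the free group).\<close>

type_synonym 'g word = "('g \<times> bool) list"

inductive pres_rel :: "'g word set \<Rightarrow> 'g word \<Rightarrow> 'g word \<Rightarrow> bool" for R where
  refl: "pres_rel R w w"
| sym: "pres_rel R v w \<Longrightarrow> pres_rel R w v"
| trans: "pres_rel R u v \<Longrightarrow> pres_rel R v w \<Longrightarrow> pres_rel R u w"
| cancel: "pres_rel R (xs @ [(x, s), (x, \<not> s)] @ ys) (xs @ ys)"
| relator: "r \<in> R \<Longrightarrow> pres_rel R (xs @ r @ ys) (xs @ ys)"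

definition pres_class :: "'g word set \<Rightarrow> 'g word \<Rightarrow> 'g word set" where
  "pres_class R w = {v. pres_rel R w v}"

definition pres_mult :: "'g word set \<Rightarrow> 'g word set \<Rightarrow> 'g word set \<Rightarrow> 'g word set" where
  "pres_mult R U V = pres_class R ((SOME u. u \<in> U) @ (SOME v. v \<in> V))"

definition presented_group :: "'g word set \<Rightarrow> 'g word set monoid" where
  "presented_group R =
     \<lparr>carrier = range (pres_class R),
      monoid.mult = pres_mult R,
      one = pres_class R []\<rparr>"

definition pres_gen :: "'g word set \<Rightarrow> 'g \<Rightarrow> 'g word set" where
  "pres_gen R x = pres_class R [(x, True)]"

datatype pi_gen = T | A | B

definition pi_rels :: "pi_gen word set" where
  "pi_rels = { [(T, False), (A, True), (T, True), (A, False), (A, False)],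
               [(T, False), (B, True), (B, True), (T, True), (B, False)] }"

definition pi_group :: "pi_gen word set monoid" where
  "pi_group = presented_group pi_rels"

text \<open>The HNN extension \<open>\<langle>B, t | t^-1 a t = \<theta>(a), a \<in> A+\<rangle>\<close> of a group B with
  \<open>\<theta> : A+ \<rightarrow> A-\<close>. Generators: Some b for elements of B, None for the stable letter t.
  Relators: the multiplication table of B, the killing of symbols outside carrier B,
  and t^-1 a t \<theta>(a)^-1 for a in A+.\<close>
definition HNN_rels :: "('b, 'm) monoid_scheme \<Rightarrow> 'b set \<Rightarrow> ('b \<Rightarrow> 'b) \<Rightarrow> 'b option word set" where
  "HNN_rels Bg Ap \<theta> =
     {[(Some x, True), (Some y, True), (Some (x \<otimes>\<^bsub>Bg\<^esub> y), False)] | x y.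
        x \<in> carrier Bg \<and> y \<in> carrier Bg}
   \<union> {[(Some x, True)] | x. x \<notin> carrier Bg}
   \<union> {[(None, False), (Some a, True), (None, True), (Some (\<theta> a), False)] | a. a \<in> Ap}"

definition HNN :: "('b, 'm) monoid_scheme \<Rightarrow> 'b set \<Rightarrow> ('b \<Rightarrow> 'b) \<Rightarrow> 'b option word set monoid" where
  "HNN Bg Ap \<theta> = presented_group (HNN_rels Bg Ap \<theta>)"

definition HNN_base :: "('b, 'm) monoid_scheme \<Rightarrow> 'b set \<Rightarrow> ('b \<Rightarrow> 'b) \<Rightarrow> 'b \<Rightarrow> 'b option word set" where
  "HNN_base Bg Ap \<theta> x = pres_gen (HNN_rels Bg Ap \<theta>) (Some x)"

definition HNN_stable :: "('b, 'm) monoid_scheme \<Rightarrow> 'b set \<Rightarrow> ('b \<Rightarrow> 'b) \<Rightarrow> 'b option word set" where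
  "HNN_stable Bg Ap \<theta> = pres_gen (HNN_rels Bg Ap \<theta>) None"

definition fin_gen :: "('a, 'm) monoid_scheme \<Rightarrow> bool" where
  "fin_gen G \<longleftrightarrow> (\<exists>S. finite S \<and> S \<subseteq> carrier G \<and> generate G S = carrier G)"

text \<open>Minimal number of generators (meaningful for finitely generated groups).\<close>
definition rk :: "('a, 'm) monoid_scheme \<Rightarrow> nat" where
  "rk G = (LEAST n. \<exists>S. finite S \<and> card S = n \<and> S \<subseteq> carrier G \<and> generate G S = carrier G)"

definition phi_kernel :: "('a, 'm) monoid_scheme \<Rightarrow> ('a \<Rightarrow> int) \<Rightarrow> nat \<Rightarrow> 'a set" where
  "phi_kernel G \<phi> i = {g \<in> carrier G. \<phi> g mod int i = 0}"

definition rank_gradient :: "('a, 'm) monoid_scheme \<Rightarrow> ('a \<Rightarrow> int) \<Rightarrow> ereal" where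
  "rank_gradient G \<phi> =
     liminf (\<lambda>i. ereal (real (rk (G\<lparr>carrier := phi_kernel G \<phi> i\<rparr>))
                     / real (card (rcosets\<^bsub>G\<^esub> (phi_kernel G \<phi> i)))))"

end

theory Submission
  imports Defs
begin


lemma pres_rel_cong:
  "pres_rel R u v \<Longrightarrow> pres_rel R (xs @ u @ ys) (xs @ v @ ys)"
proof (induction rule: pres_rel.induct)
  case (refl w) then show ?case by (rule pres_rel.refl)
next
  case (sym v w) then show ?case by (metis pres_rel.sym)
next
  case (trans u v w) then show ?case by (metis pres_rel.trans)
next
  case (cancel xs' x s ys')
  show ?case using pres_rel.cancel[of R "xs @ xs'" x s "ys' @ ys"] by simp
next
  case (relator r xs' ys')
  show ?case using pres_rel.relator[of r R "xs @ xs'" "ys' @ ys"] relator by simp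
qed

lemma pres_rel_app:
  assumes "pres_rel R u u'" "pres_rel R v v'"
  shows "pres_rel R (u @ v) (u' @ v')"
proof -
  have "pres_rel R ([] @ u @ v) ([] @ u' @ v)" by (rule pres_rel_cong[OF assms(1)])
  moreover have "pres_rel R (u' @ v @ []) (u' @ v' @ [])" by (rule pres_rel_cong[OF assms(2)])
  ultimately show ?thesis by (auto intro: pres_rel.trans)
qed

lemma pres_class_eq: "pres_class R u = pres_class R v \<longleftrightarrow> pres_rel R u v"
proof
  assume e: "pres_class R u = pres_class R v"
  have "v \<in> pres_class R v" by (simp add: pres_class_def pres_rel.refl)
  then have "v \<in> pres_class R u" using e by simp
  then show "pres_rel R u v" by (simp add: pres_class_def)
next
  assume h: "pres_rel R u v"
  show "pres_class R u = pres_class R v"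
    unfolding pres_class_def using h by (auto intro: pres_rel.trans pres_rel.sym)
qed

lemma pres_class_some: "pres_rel R u (SOME u'. u' \<in> pres_class R u)"
proof -
  have "u \<in> pres_class R u" by (simp add: pres_class_def pres_rel.refl)
  then have "(SOME u'. u' \<in> pres_class R u) \<in> pres_class R u" by (rule someI)
  then show ?thesis by (simp add: pres_class_def)
qed

lemma pres_mult_class: "pres_mult R (pres_class R u) (pres_class R v) = pres_class R (u @ v)"
  unfolding pres_mult_def pres_class_eq
  by (rule pres_rel.sym, rule pres_rel_app) (rule pres_class_some)+

definition winv :: "'g word \<Rightarrow> 'g word" where
  "winv w = rev (map (\<lambda>(x, s). (x, \<not> s)) w)"

lemma winv_cancel: "pres_rel R (winv w @ w) []"
proof (induction w)
  case Nil then show ?case by (simp add: winv_def pres_rel.refl)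
next
  case (Cons a w)
  obtain x s where a: "a = (x, s)" by fastforce
  have "winv (a # w) @ a # w = winv w @ [(x, \<not> s), (x, \<not> \<not> s)] @ w"
    by (simp add: winv_def a)
  moreover have "pres_rel R (winv w @ [(x, \<not> s), (x, \<not> \<not> s)] @ w) (winv w @ w)"
    by (rule pres_rel.cancel)
  ultimately show ?case using Cons by (auto intro: pres_rel.trans)
qed

lemma carrier_pres: "carrier (presented_group R) = range (pres_class R)"
  by (simp add: presented_group_def)
lemma pres_carrierE:
  assumes "x \<in> carrier (presented_group R)"
  obtains u where "x = pres_class R u"
proof -
  have "x \<in> range (pres_class R)" using assms by (simp add: carrier_pres)
  then show ?thesis using that by blast
qed

lemma mult_pres [simp]: "pres_class R u \<otimes>\<^bsub>presented_group R\<^esub> pres_class R v = pres_class R (u @ v)"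
  by (simp add: presented_group_def pres_mult_class)
lemma one_pres [simp]: "\<one>\<^bsub>presented_group R\<^esub> = pres_class R []"
  by (simp add: presented_group_def)

lemma group_pres: "group (presented_group R)"
proof (rule groupI)
  show "x \<otimes>\<^bsub>presented_group R\<^esub> y \<in> carrier (presented_group R)"
    if "x \<in> carrier (presented_group R)" "y \<in> carrier (presented_group R)" for x y
  proof -
    note h = that
    obtain u v where "x = pres_class R u" "y = pres_class R v"
      using h by (meson pres_carrierE)
    then show ?thesis by (simp only: mult_pres carrier_pres rangeI)
  qed
  show "\<one>\<^bsub>presented_group R\<^esub> \<in> carrier (presented_group R)" by (simp add: carrier_pres)
  show "x \<otimes>\<^bsub>presented_group R\<^esub> y \<otimes>\<^bsub>presented_group R\<^esub> z =
        x \<otimes>\<^bsub>presented_group R\<^esub> (y \<otimes>\<^bsub>presented_group R\<^esub> z)"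
    if "x \<in> carrier (presented_group R)" "y \<in> carrier (presented_group R)"
       "z \<in> carrier (presented_group R)" for x y z
  proof -
    note h = that
    obtain u v w where "x = pres_class R u" "y = pres_class R v" "z = pres_class R w"
      using h by (meson pres_carrierE)
    then show ?thesis by (simp only: mult_pres append_assoc)
  qed
  show "\<one>\<^bsub>presented_group R\<^esub> \<otimes>\<^bsub>presented_group R\<^esub> x = x"
    if "x \<in> carrier (presented_group R)" for x
  proof -
    note h = that
    obtain u where "x = pres_class R u" using h by (meson pres_carrierE)
    then show ?thesis by (simp only: one_pres mult_pres append_Nil)
  qed
  show "\<exists>y\<in>carrier (presented_group R). y \<otimes>\<^bsub>presented_group R\<^esub> x = \<one>\<^bsub>presented_group R\<^esub>"
    if "x \<in> carrier (presented_group R)" for x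
  proof -
    note h = that
    obtain w where x: "x = pres_class R w" using h by (rule pres_carrierE)
    show ?thesis
      by (rule bexI[of _ "pres_class R (winv w)"]) (auto simp: x pres_class_eq winv_cancel carrier_pres)
  qed
qed

lemma pres_class_carrier [simp]: "pres_class R w \<in> carrier (presented_group R)"
  by (simp add: carrier_pres)

lemma pres_gen_carrier [simp]: "pres_gen R x \<in> carrier (presented_group R)"
  by (simp add: pres_gen_def carrier_pres)

lemma pres_class_relator: "r \<in> R \<Longrightarrow> pres_class R r = \<one>\<^bsub>presented_group R\<^esub>"
  using pres_rel.relator[of r R "[]" "[]"] by (simp add: pres_class_eq)

lemma pres_class_Cons:
  "pres_class R ((x, s) # w) =
     (if s then pres_gen R x else inv\<^bsub>presented_group R\<^esub> (pres_gen R x)) \<otimes>\<^bsub>presented_group R\<^esub> pres_class R w"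
proof -
  interpret group "presented_group R" by (rule group_pres)
  have "pres_class R ((x, s) # w) = pres_class R [(x,s)] \<otimes>\<^bsub>presented_group R\<^esub> pres_class R w"
    by simp
  moreover have "pres_class R [(x,False)] = inv\<^bsub>presented_group R\<^esub> (pres_gen R x)"
  proof (rule inv_equality[symmetric])
    show "pres_class R [(x, False)] \<otimes>\<^bsub>presented_group R\<^esub> pres_gen R x = \<one>\<^bsub>presented_group R\<^esub>"
      using pres_rel.cancel[of R "[]" x False "[]"] by (simp add: pres_gen_def pres_class_eq)
  qed (auto simp: pres_gen_def carrier_pres)
  ultimately show ?thesis by (cases s) (auto simp: pres_gen_def)
qed

lemma pres_class_Nil: "pres_class R [] = \<one>\<^bsub>presented_group R\<^esub>" by simp

lemma pres_class_single:
  "pres_class R [(x, s)] = (if s then pres_gen R x else inv\<^bsub>presented_group R\<^esub> (pres_gen R x))"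
proof -
  interpret group "presented_group R" by (rule group_pres)
  have c: "(if s then pres_gen R x else inv\<^bsub>presented_group R\<^esub> (pres_gen R x)) \<in> carrier (presented_group R)"
    by simp
  have "pres_class R [(x,s)] = (if s then pres_gen R x else inv\<^bsub>presented_group R\<^esub> (pres_gen R x)) \<otimes>\<^bsub>presented_group R\<^esub> \<one>\<^bsub>presented_group R\<^esub>"
    using pres_class_Cons[of R x s "[]"] by (simp only: pres_class_Nil)
  also have "\<dots> = (if s then pres_gen R x else inv\<^bsub>presented_group R\<^esub> (pres_gen R x))"
    by (rule r_one[OF c])
  finally show ?thesis .
qed

lemma pres_elem_induct:
  assumes "U \<in> carrier (presented_group R)"
    and "P \<one>\<^bsub>presented_group R\<^esub>"
    and "\<And>V x. V \<in> carrier (presented_group R) \<Longrightarrow> P V \<Longrightarrow> P (V \<otimes>\<^bsub>presented_group R\<^esub> pres_gen R x)"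
    and "\<And>V x. V \<in> carrier (presented_group R) \<Longrightarrow> P V \<Longrightarrow> P (V \<otimes>\<^bsub>presented_group R\<^esub> inv\<^bsub>presented_group R\<^esub> pres_gen R x)"
  shows "P U"
proof -
  obtain w where U: "U = pres_class R w" using assms(1) by (auto simp: carrier_pres)
  have "P (pres_class R w)"
  proof (induction w rule: rev_induct)
    case Nil then show ?case using assms(2) by (simp only: pres_class_Nil)
  next
    case (snoc a w)
    obtain x s where a: "a = (x, s)" by fastforce
    have e: "pres_class R (w @ [a]) = pres_class R w \<otimes>\<^bsub>presented_group R\<^esub> pres_class R [(x,s)]"
      by (simp only: a mult_pres)
    show ?case
    proof (cases s)
      case True
      then show ?thesis using e assms(3)[OF pres_class_carrier snoc, of x]
        by (simp only: pres_class_single if_True)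
    next
      case False
      then show ?thesis using e assms(4)[OF pres_class_carrier snoc, of x]
        by (simp only: pres_class_single if_False)
    qed
  qed
  then show ?thesis by (simp only: U)
qed


definition weval :: "('b, 'm) monoid_scheme \<Rightarrow> ('g \<Rightarrow> 'b) \<Rightarrow> 'g word \<Rightarrow> 'b" where
  "weval H f w = foldr (\<lambda>(x, s) acc. (if s then f x else inv\<^bsub>H\<^esub> (f x)) \<otimes>\<^bsub>H\<^esub> acc) w \<one>\<^bsub>H\<^esub>"

lemma weval_Nil [simp]: "weval H f [] = \<one>\<^bsub>H\<^esub>"
  by (simp add: weval_def)

lemma weval_Cons [simp]:
  "weval H f ((x, s) # w) = (if s then f x else inv\<^bsub>H\<^esub> (f x)) \<otimes>\<^bsub>H\<^esub> weval H f w"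
  by (simp add: weval_def)

context group
begin

lemma weval_carrier: "f \<in> UNIV \<rightarrow> carrier G \<Longrightarrow> weval G f w \<in> carrier G"
proof (induction w)
  case Nil then show ?case by simp
next
  case (Cons a w)
  obtain x s where "a = (x, s)" by fastforce
  then show ?case using Cons by auto
qed

lemma weval_append: "f \<in> UNIV \<rightarrow> carrier G \<Longrightarrow> weval G f (u @ v) = weval G f u \<otimes> weval G f v"
proof (induction u)
  case Nil then show ?case by (simp add: weval_carrier)
next
  case (Cons a u)
  obtain x s where a: "a = (x, s)" by fastforce
  have fx: "f x \<in> carrier G" using Cons.prems by auto
  show ?case using Cons fx by (simp add: a m_assoc weval_carrier)
qed

lemma weval_rel:
  assumes f: "f \<in> UNIV \<rightarrow> carrier G" and R: "\<forall>r\<in>R. weval G f r = \<one>"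
  shows "pres_rel R u v \<Longrightarrow> weval G f u = weval G f v"
proof (induction rule: pres_rel.induct)
  case (cancel xs x s ys)
  have fx: "f x \<in> carrier G" using f by auto
  have "weval G f [(x, s), (x, \<not> s)] = \<one>"
    using fx by (cases s) auto
  then show ?case using f fx by (cases s) (simp_all add: weval_append weval_carrier m_assoc[symmetric])
next
  case (relator r xs ys)
  then show ?case using f R by (simp add: weval_append weval_carrier)
qed auto

end

definition pres_lift :: "'g word set \<Rightarrow> ('b, 'm) monoid_scheme \<Rightarrow> ('g \<Rightarrow> 'b) \<Rightarrow> 'g word set \<Rightarrow> 'b" where
  "pres_lift R H f U = weval H f (SOME u. u \<in> U)"

lemma pres_lift_class:
  assumes "group H" "f \<in> UNIV \<rightarrow> carrier H" "\<forall>r\<in>R. weval H f r = \<one>\<^bsub>H\<^esub>"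
  shows "pres_lift R H f (pres_class R u) = weval H f u"
  unfolding pres_lift_def
  using group.weval_rel[OF assms pres_class_some[of R u]] by simp

lemma pres_lift_hom:
  assumes "group H" "f \<in> UNIV \<rightarrow> carrier H" "\<forall>r\<in>R. weval H f r = \<one>\<^bsub>H\<^esub>"
  shows "pres_lift R H f \<in> hom (presented_group R) H"
proof (rule homI)
  fix U assume "U \<in> carrier (presented_group R)"
  then obtain u where "U = pres_class R u" by (rule pres_carrierE)
  then show "pres_lift R H f U \<in> carrier H"
    using pres_lift_class[OF assms] group.weval_carrier[OF assms(1,2)] by simp
next
  fix U V assume "U \<in> carrier (presented_group R)" "V \<in> carrier (presented_group R)"
  then obtain u v where "U = pres_class R u" "V = pres_class R v" by (meson pres_carrierE)
  then show "pres_lift R H f (U \<otimes>\<^bsub>presented_group R\<^esub> V) = pres_lift R H f U \<otimes>\<^bsub>H\<^esub> pres_lift R H f V"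
    using pres_lift_class[OF assms] group.weval_append[OF assms(1,2)] by (simp add: mult_pres)
qed

lemma pres_lift_gen:
  assumes "group H" "f \<in> UNIV \<rightarrow> carrier H" "\<forall>r\<in>R. weval H f r = \<one>\<^bsub>H\<^esub>"
  shows "pres_lift R H f (pres_gen R x) = f x"
  using pres_lift_class[OF assms, of "[(x, True)]"] assms(1,2)
  by (auto simp: pres_gen_def dest: monoid.r_one[OF group.is_monoid])

lemma pres_hom_eq:
  assumes H: "group H" and h1: "h1 \<in> hom (presented_group R) H" and h2: "h2 \<in> hom (presented_group R) H"
    and gen: "\<And>x. h1 (pres_gen R x) = h2 (pres_gen R x)"
    and U: "U \<in> carrier (presented_group R)"
  shows "h1 U = h2 U"
proof -
  interpret G: group "presented_group R" by (rule group_pres)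
  interpret g1: group_hom "presented_group R" H h1
    by (simp add: group_hom_def group_hom_axioms_def G.group_axioms H h1)
  interpret g2: group_hom "presented_group R" H h2
    by (simp add: group_hom_def group_hom_axioms_def G.group_axioms H h2)
  show ?thesis
  proof (rule pres_elem_induct[OF U])
    show "h1 \<one>\<^bsub>presented_group R\<^esub> = h2 \<one>\<^bsub>presented_group R\<^esub>" by (metis g1.hom_one g2.hom_one)
  next
    fix V x assume "V \<in> carrier (presented_group R)" "h1 V = h2 V"
    then show "h1 (V \<otimes>\<^bsub>presented_group R\<^esub> pres_gen R x) = h2 (V \<otimes>\<^bsub>presented_group R\<^esub> pres_gen R x)"
      using gen by simp
  next
    fix V x assume "V \<in> carrier (presented_group R)" "h1 V = h2 V"
    then show "h1 (V \<otimes>\<^bsub>presented_group R\<^esub> inv\<^bsub>presented_group R\<^esub> pres_gen R x) =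
               h2 (V \<otimes>\<^bsub>presented_group R\<^esub> inv\<^bsub>presented_group R\<^esub> pres_gen R x)"
      using gen by simp
  qed
qed

definition Aff :: "(int \<times> real) monoid" where
  "Aff = \<lparr>carrier = UNIV,
          monoid.mult = (\<lambda>p q. (fst p + fst q, 2 powr (real_of_int (fst p)) * snd q + snd p)),
          one = (0, 0)\<rparr>"

lemma Aff_carrier [simp]: "carrier Aff = UNIV" by (simp add: Aff_def)
lemma Aff_mult [simp]: "(a, c) \<otimes>\<^bsub>Aff\<^esub> (b, d) = (a + b, 2 powr (real_of_int a) * d + c)"
  by (simp add: Aff_def)
lemma Aff_one [simp]: "\<one>\<^bsub>Aff\<^esub> = (0, 0)" by (simp add: Aff_def)

lemma group_Aff: "group Aff"
proof (rule groupI)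
  fix x y z :: "int \<times> real"
  obtain a c where x: "x = (a, c)" by fastforce
  obtain b d where y: "y = (b, d)" by fastforce
  obtain e g where z: "z = (e, g)" by fastforce
  show "x \<otimes>\<^bsub>Aff\<^esub> y \<otimes>\<^bsub>Aff\<^esub> z = x \<otimes>\<^bsub>Aff\<^esub> (y \<otimes>\<^bsub>Aff\<^esub> z)"
    by (simp add: x y z powr_add algebra_simps)
next
  fix x :: "int \<times> real"
  obtain a c where x: "x = (a, c)" by fastforce
  show "\<one>\<^bsub>Aff\<^esub> \<otimes>\<^bsub>Aff\<^esub> x = x" by (simp add: x)
  show "\<exists>y\<in>carrier Aff. y \<otimes>\<^bsub>Aff\<^esub> x = \<one>\<^bsub>Aff\<^esub>"
    by (rule bexI[of _ "(- a, - (2 powr (real_of_int (- a))) * c)"]) (simp_all add: x)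
qed simp_all

lemma Aff_inv [simp]: "inv\<^bsub>Aff\<^esub> (a, c) = (- a, - (2 powr (real_of_int (- a))) * c)"
  by (rule group.inv_equality[OF group_Aff]) simp_all

lemma fst_hom_Aff: "fst \<in> hom Aff integer_group"
  by (rule homI) (auto simp: Aff_def)

lemma nfst_hom_Aff: "(\<lambda>p. - fst p) \<in> hom Aff integer_group"
  by (rule homI) (auto simp: Aff_def)


abbreviation "PI \<equiv> pi_group"
abbreviation "gt \<equiv> pres_gen pi_rels T"
abbreviation "ga \<equiv> pres_gen pi_rels A"
abbreviation "gb \<equiv> pres_gen pi_rels B"

lemma group_PI: "group PI"
  unfolding pi_group_def by (rule group_pres)

lemma PI_gens [simp]: "gt \<in> carrier PI" "ga \<in> carrier PI" "gb \<in> carrier PI"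
  unfolding pi_group_def by simp_all

lemma PI_rel1: "inv\<^bsub>PI\<^esub> gt \<otimes>\<^bsub>PI\<^esub> ga \<otimes>\<^bsub>PI\<^esub> gt = ga \<otimes>\<^bsub>PI\<^esub> ga"
proof -
  interpret G: group PI by (rule group_PI)
  have "pres_class pi_rels [(T, False), (A, True), (T, True), (A, False), (A, False)] = \<one>\<^bsub>PI\<^esub>"
    unfolding pi_group_def by (rule pres_class_relator) (simp add: pi_rels_def)
  then have "inv\<^bsub>PI\<^esub> gt \<otimes>\<^bsub>PI\<^esub> (ga \<otimes>\<^bsub>PI\<^esub> (gt \<otimes>\<^bsub>PI\<^esub> (inv\<^bsub>PI\<^esub> ga \<otimes>\<^bsub>PI\<^esub> (inv\<^bsub>PI\<^esub> ga \<otimes>\<^bsub>PI\<^esub> \<one>\<^bsub>PI\<^esub>)))) = \<one>\<^bsub>PI\<^esub>"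
    by (simp only: pres_class_Cons pres_class_Nil if_True if_False pi_group_def)
  then have "(inv\<^bsub>PI\<^esub> gt \<otimes>\<^bsub>PI\<^esub> ga \<otimes>\<^bsub>PI\<^esub> gt) \<otimes>\<^bsub>PI\<^esub> inv\<^bsub>PI\<^esub> (ga \<otimes>\<^bsub>PI\<^esub> ga) = \<one>\<^bsub>PI\<^esub>"
    by (simp add: G.m_assoc G.inv_mult_group)
  then show ?thesis by (metis PI_gens G.inv_closed G.m_closed G.inv_equality G.inv_inv)
qed

lemma PI_rel2: "inv\<^bsub>PI\<^esub> gt \<otimes>\<^bsub>PI\<^esub> (gb \<otimes>\<^bsub>PI\<^esub> gb) \<otimes>\<^bsub>PI\<^esub> gt = gb"
proof -
  interpret G: group PI by (rule group_PI)
  have "pres_class pi_rels [(T, False), (B, True), (B, True), (T, True), (B, False)] = \<one>\<^bsub>PI\<^esub>"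
    unfolding pi_group_def by (rule pres_class_relator) (simp add: pi_rels_def)
  then have "inv\<^bsub>PI\<^esub> gt \<otimes>\<^bsub>PI\<^esub> (gb \<otimes>\<^bsub>PI\<^esub> (gb \<otimes>\<^bsub>PI\<^esub> (gt \<otimes>\<^bsub>PI\<^esub> (inv\<^bsub>PI\<^esub> gb \<otimes>\<^bsub>PI\<^esub> \<one>\<^bsub>PI\<^esub>)))) = \<one>\<^bsub>PI\<^esub>"
    by (simp only: pres_class_Cons pres_class_Nil if_True if_False pi_group_def)
  then have "(inv\<^bsub>PI\<^esub> gt \<otimes>\<^bsub>PI\<^esub> (gb \<otimes>\<^bsub>PI\<^esub> gb) \<otimes>\<^bsub>PI\<^esub> gt) \<otimes>\<^bsub>PI\<^esub> inv\<^bsub>PI\<^esub> gb = \<one>\<^bsub>PI\<^esub>"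
    by (simp add: G.m_assoc)
  then show ?thesis by (metis PI_gens G.inv_closed G.m_closed G.inv_equality G.inv_inv)
qed

definition fb :: "pi_gen \<Rightarrow> int \<times> real" where
  "fb x = (case x of T \<Rightarrow> (1, 0) | A \<Rightarrow> (0, 0) | B \<Rightarrow> (0, 1))"
definition fa :: "pi_gen \<Rightarrow> int \<times> real" where
  "fa x = (case x of T \<Rightarrow> (-1, 0) | A \<Rightarrow> (0, 1) | B \<Rightarrow> (0, 0))"

lemma fb_rels: "\<forall>r\<in>pi_rels. weval Aff fb r = \<one>\<^bsub>Aff\<^esub>"
  by (simp add: pi_rels_def fb_def)
lemma fa_rels: "\<forall>r\<in>pi_rels. weval Aff fa r = \<one>\<^bsub>Aff\<^esub>"
  by (simp add: pi_rels_def fa_def)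

definition rhob where "rhob = pres_lift pi_rels Aff fb"
definition rhoa where "rhoa = pres_lift pi_rels Aff fa"

lemma rhob_hom: "rhob \<in> hom PI Aff"
  unfolding rhob_def pi_group_def by (rule pres_lift_hom[OF group_Aff _ fb_rels]) simp
lemma rhoa_hom: "rhoa \<in> hom PI Aff"
  unfolding rhoa_def pi_group_def by (rule pres_lift_hom[OF group_Aff _ fa_rels]) simp

lemma rhob_gen: "rhob (pres_gen pi_rels x) = fb x"
  unfolding rhob_def by (rule pres_lift_gen[OF group_Aff _ fb_rels]) simp
lemma rhoa_gen: "rhoa (pres_gen pi_rels x) = fa x"
  unfolding rhoa_def by (rule pres_lift_gen[OF group_Aff _ fa_rels]) simp

locale phi_setup =
  fixes \<phi> :: "pi_gen word set \<Rightarrow> int"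
  assumes phi_hom: "\<phi> \<in> hom pi_group integer_group"
    and phiT: "\<phi> (pres_gen pi_rels T) = 1"
    and phiA: "\<phi> (pres_gen pi_rels A) = 0"
    and phiB: "\<phi> (pres_gen pi_rels B) = 0"
begin

lemma phi_rhob: "g \<in> carrier PI \<Longrightarrow> \<phi> g = fst (rhob g)"
  unfolding pi_group_def
proof (rule pres_hom_eq[OF group_integer_group, of \<phi> _ "fst \<circ> rhob", simplified])
  show "\<phi> \<in> hom (presented_group pi_rels) integer_group" using phi_hom by (simp add: pi_group_def)
  show "fst \<circ> rhob \<in> hom (presented_group pi_rels) integer_group"
    using hom_compose[OF rhob_hom fst_hom_Aff] by (simp add: pi_group_def)
  show "\<phi> (pres_gen pi_rels x) = fst (rhob (pres_gen pi_rels x))" for x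
    by (cases x) (simp_all add: rhob_gen fb_def phiT phiA phiB)
qed

lemma phi_rhoa: "g \<in> carrier PI \<Longrightarrow> \<phi> g = - fst (rhoa g)"
  unfolding pi_group_def
proof (rule pres_hom_eq[OF group_integer_group, of \<phi> _ "\<lambda>g. - fst (rhoa g)", simplified])
  show "\<phi> \<in> hom (presented_group pi_rels) integer_group" using phi_hom by (simp add: pi_group_def)
  show "(\<lambda>g. - fst (rhoa g)) \<in> hom (presented_group pi_rels) integer_group"
    using hom_compose[OF rhoa_hom nfst_hom_Aff] by (simp add: pi_group_def comp_def)
  show "\<phi> (pres_gen pi_rels x) = - fst (rhoa (pres_gen pi_rels x))" for x
    by (cases x) (simp_all add: rhoa_gen fa_def phiT phiA phiB)
qed

end


context group
begin

lemma cancel_l1: "x \<in> carrier G \<Longrightarrow> y \<in> carrier G \<Longrightarrow> x \<otimes> (inv x \<otimes> y) = y"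
  by (simp add: m_assoc[symmetric])
lemma cancel_l2: "x \<in> carrier G \<Longrightarrow> y \<in> carrier G \<Longrightarrow> inv x \<otimes> (x \<otimes> y) = y"
  by (simp add: m_assoc[symmetric])

definition inW :: "'a \<Rightarrow> 'a set \<Rightarrow> 'a \<Rightarrow> bool" where
  "inW u Bs g \<longleftrightarrow> (\<exists>k m b. b \<in> Bs \<and> g = u [^] (k::nat) \<otimes> b \<otimes> inv (u [^] (m::nat)))"

lemma conj_pow_in:
  assumes u: "u \<in> carrier G" and Bs: "Bs \<subseteq> carrier G" and cj: "\<forall>b\<in>Bs. inv u \<otimes> b \<otimes> u \<in> Bs"
    and b: "b \<in> Bs"
  shows "inv (u [^] (m::nat)) \<otimes> b \<otimes> u [^] m \<in> Bs"
proof (induction m)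
  case 0 then show ?case using b Bs by auto
next
  case (Suc m)
  have bc: "b \<in> carrier G" using b Bs by auto
  have "inv (u [^] Suc m) \<otimes> b \<otimes> u [^] Suc m = inv u \<otimes> (inv (u [^] m) \<otimes> b \<otimes> u [^] m) \<otimes> u"
    using u bc by (simp add: nat_pow_Suc inv_mult_group m_assoc)
  then show ?case using cj Suc by simp
qed

lemma inW_one: "\<one> \<in> Bs \<Longrightarrow> u \<in> carrier G \<Longrightarrow> inW u Bs \<one>"
  unfolding inW_def by (rule exI[of _ 0], rule exI[of _ 0], rule exI[of _ \<one>]) simp

lemma inW_carrier:
  assumes "u \<in> carrier G" "Bs \<subseteq> carrier G" "inW u Bs g" shows "g \<in> carrier G"
  using assms unfolding inW_def by auto

lemma inW_mult_B:
  assumes u: "u \<in> carrier G" and Bs: "Bs \<subseteq> carrier G" and cj: "\<forall>b\<in>Bs. inv u \<otimes> b \<otimes> u \<in> Bs"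
    and mc: "\<forall>x\<in>Bs. \<forall>y\<in>Bs. x \<otimes> y \<in> Bs"
    and g: "inW u Bs g" and b': "b' \<in> Bs"
  shows "inW u Bs (g \<otimes> b')"
proof -
  obtain k m b where b: "b \<in> Bs" and g: "g = u [^] (k::nat) \<otimes> b \<otimes> inv (u [^] (m::nat))"
    using g unfolding inW_def by blast
  have bc: "b \<in> carrier G" "b' \<in> carrier G" using b b' Bs by auto
  have c: "inv (u [^] m) \<otimes> b' \<otimes> u [^] m \<in> Bs" by (rule conj_pow_in[OF u Bs cj b'])
  have "g \<otimes> b' = u [^] k \<otimes> (b \<otimes> (inv (u [^] m) \<otimes> b' \<otimes> u [^] m)) \<otimes> inv (u [^] m)"
    using u bc by (simp add: g m_assoc)
  moreover have "b \<otimes> (inv (u [^] m) \<otimes> b' \<otimes> u [^] m) \<in> Bs" using mc b c by blast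
  ultimately show ?thesis unfolding inW_def by blast
qed

lemma inv_pow_Suc:
  assumes u: "u \<in> carrier G" shows "inv (u [^] (m::nat) \<otimes> u) = inv (u [^] m) \<otimes> inv u"
proof -
  have "u [^] m \<otimes> u = u \<otimes> u [^] m" using nat_pow_Suc2[OF u, of m] by simp
  then show ?thesis using u by (simp add: inv_mult_group)
qed

lemma inW_mult_inv_u:
  assumes u: "u \<in> carrier G" and Bs: "Bs \<subseteq> carrier G" and g: "inW u Bs g"
  shows "inW u Bs (g \<otimes> inv u)"
proof -
  obtain k m b where b: "b \<in> Bs" and g: "g = u [^] (k::nat) \<otimes> b \<otimes> inv (u [^] (m::nat))"
    using g unfolding inW_def by blast
  have bc: "b \<in> carrier G" using b Bs by auto
  have "g \<otimes> inv u = u [^] k \<otimes> b \<otimes> inv (u [^] Suc m)"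
    using u bc by (simp add: g m_assoc inv_pow_Suc)
  then show ?thesis unfolding inW_def using b by blast
qed

lemma inW_mult_u:
  assumes u: "u \<in> carrier G" and Bs: "Bs \<subseteq> carrier G" and cj: "\<forall>b\<in>Bs. inv u \<otimes> b \<otimes> u \<in> Bs"
    and g: "inW u Bs g"
  shows "inW u Bs (g \<otimes> u)"
proof -
  obtain k m b where b: "b \<in> Bs" and g: "g = u [^] (k::nat) \<otimes> b \<otimes> inv (u [^] (m::nat))"
    using g unfolding inW_def by blast
  have bc: "b \<in> carrier G" using b Bs by auto
  show ?thesis
  proof (cases m)
    case 0
    have "g \<otimes> u = u [^] Suc k \<otimes> (inv u \<otimes> b \<otimes> u) \<otimes> inv (u [^] (0::nat))"
      using u bc by (simp add: g 0 m_assoc nat_pow_Suc cancel_l1)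
    moreover have "inv u \<otimes> b \<otimes> u \<in> Bs" using cj b by blast
    ultimately show ?thesis unfolding inW_def by blast
  next
    case (Suc m')
    have "g \<otimes> u = u [^] k \<otimes> b \<otimes> inv (u [^] m')"
      using u bc by (simp add: g Suc m_assoc inv_pow_Suc)
    then show ?thesis unfolding inW_def using b by blast
  qed
qed

end

definition E :: "nat \<Rightarrow> real \<Rightarrow> bool" where
  "E M c \<longleftrightarrow> (\<exists>z::int. c = real_of_int z / 2 ^ M)"

definition D :: "real \<Rightarrow> bool" where
  "D c \<longleftrightarrow> (\<exists>M. E M c)"

lemma E_mono: "E M c \<Longrightarrow> M \<le> M' \<Longrightarrow> E M' c"
proof -
  assume "E M c" "M \<le> M'"
  then obtain z where z: "c = real_of_int z / 2 ^ M" unfolding E_def by blast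
  have "(2::real) ^ M' = 2 ^ M * 2 ^ (M' - M)" using \<open>M \<le> M'\<close> by (simp flip: power_add)
  then have "c = real_of_int (z * 2 ^ (M' - M)) / 2 ^ M'" using z by simp
  then show ?thesis unfolding E_def by blast
qed

lemma E_add: "E M a \<Longrightarrow> E M b \<Longrightarrow> E M (a + b)"
proof -
  assume "E M a" "E M b"
  then obtain z w where "a = real_of_int z / 2 ^ M" "b = real_of_int w / 2 ^ M" unfolding E_def by blast
  then have "a + b = real_of_int (z + w) / 2 ^ M" by (simp add: add_divide_distrib)
  then show ?thesis unfolding E_def by blast
qed

lemma E_neg: "E M a \<Longrightarrow> E M (- a)"
proof -
  assume "E M a"
  then obtain z where "a = real_of_int z / 2 ^ M" unfolding E_def by blast
  then have "- a = real_of_int (- z) / 2 ^ M" by simp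
  then show ?thesis unfolding E_def by blast
qed

lemma E_zero: "E M 0"
  unfolding E_def by (auto intro!: exI[of _ 0])

lemma D_add: "D a \<Longrightarrow> D b \<Longrightarrow> D (a + b)"
  unfolding D_def by (meson E_add E_mono max.cobounded1 max.cobounded2)

lemma D_neg: "D a \<Longrightarrow> D (- a)"
  unfolding D_def using E_neg by blast

lemma D_0: "D 0" unfolding D_def using E_zero by blast
lemma D_1: "D 1" unfolding D_def E_def by (rule exI[of _ 0]) (auto intro!: exI[of _ 1])

lemma D_powr: "D c \<Longrightarrow> D (2 powr (real_of_int n) * c)"
proof -
  assume "D c"
  then obtain M z where z: "c = real_of_int z / 2 ^ M" unfolding D_def E_def by blast
  show ?thesis
  proof (cases "n \<ge> 0")
    case True
    then have "2 powr (real_of_int n) = (2::real) ^ nat n"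
      by (metis of_int_of_nat_eq of_nat_nat powr_realpow zero_less_numeral)
    then have "2 powr (real_of_int n) * c = real_of_int (2 ^ nat n * z) / 2 ^ M" using z by simp
    then show ?thesis unfolding D_def E_def by blast
  next
    case False
    then have "2 powr (real_of_int n) = 1 / (2::real) ^ nat (- n)"
      by (simp add: powr_minus_divide[symmetric] powr_realpow[symmetric])
    then have "2 powr (real_of_int n) * c = real_of_int z / 2 ^ (M + nat (- n))" using z
      by (simp add: power_add)
    then show ?thesis unfolding D_def E_def by blast
  qed
qed

lemma Aff_fst_mult: "fst (x \<otimes>\<^bsub>Aff\<^esub> y) = fst x + fst y"
  by (simp add: Aff_def)

lemma Aff_pow_fst: "fst (p [^]\<^bsub>Aff\<^esub> (k::nat)) = int k * fst p"
proof (induction k)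
  case 0 then show ?case by simp
next
  case (Suc k)
  show ?case using Suc by (simp add: Aff_fst_mult algebra_simps)
qed

lemma Aff_conj:
  assumes "fst p = 1" "fst q = 0"
    and "fst (p [^]\<^bsub>Aff\<^esub> (k::nat) \<otimes>\<^bsub>Aff\<^esub> q \<otimes>\<^bsub>Aff\<^esub> inv\<^bsub>Aff\<^esub> (p [^]\<^bsub>Aff\<^esub> (m::nat))) = 0"
  shows "k = m \<and> snd (p [^]\<^bsub>Aff\<^esub> k \<otimes>\<^bsub>Aff\<^esub> q \<otimes>\<^bsub>Aff\<^esub> inv\<^bsub>Aff\<^esub> (p [^]\<^bsub>Aff\<^esub> m)) = 2 ^ k * snd q"
proof -
  obtain d where d: "p [^]\<^bsub>Aff\<^esub> k = (int k, d)" using Aff_pow_fst[of p k] assms(1)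
    by (metis prod.collapse mult.right_neutral)
  obtain e where e: "p [^]\<^bsub>Aff\<^esub> m = (int m, e)" using Aff_pow_fst[of p m] assms(1)
    by (metis prod.collapse mult.right_neutral)
  obtain c where q: "q = (0, c)" using assms(2) by (metis prod.collapse)
  have km: "k = m" using assms(3) by (simp add: d e q)
  then have de: "d = e" using d e by simp
  have "(2::real) powr (real k) * 2 powr (- real k) = 1" by (simp flip: powr_add)
  then show ?thesis using km de
    by (simp add: d e q algebra_simps powr_realpow)
qed


lemma two_powr_m1: "(2::real) powr (real_of_int (-1)) = 1 / 2"
  by (simp add: powr_minus_divide)

lemma Aff_D_mult: "D (snd p) \<Longrightarrow> D (snd q) \<Longrightarrow> D (snd (p \<otimes>\<^bsub>Aff\<^esub> q))"
  by (cases p, cases q) (simp add: D_add D_powr)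

lemma Aff_D_inv: "D (snd p) \<Longrightarrow> D (snd (inv\<^bsub>Aff\<^esub> p))"
proof (cases p)
  case (Pair a c)
  assume "D (snd p)"
  then have "D (2 powr real_of_int (- a) * c)" using Pair D_powr[of c "- a"] by simp
  then show ?thesis using Pair by (simp add: D_neg)
qed

lemma all_D:
  assumes rho: "\<rho> \<in> hom PI Aff" and gens: "\<And>x. D (snd (\<rho> (pres_gen pi_rels x)))"
    and g: "g \<in> carrier PI"
  shows "D (snd (\<rho> g))"
proof -
  interpret GH: group_hom PI Aff \<rho>
    by (simp add: group_hom_def group_hom_axioms_def group_PI group_Aff rho)
  show ?thesis
    using g unfolding pi_group_def
  proof (rule pres_elem_induct)
    show "D (snd (\<rho> \<one>\<^bsub>presented_group pi_rels\<^esub>))"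
      using GH.hom_one by (simp add: pi_group_def D_0 del: one_pres)
  next
    fix V x assume V: "V \<in> carrier (presented_group pi_rels)" "D (snd (\<rho> V))"
    have "\<rho> (V \<otimes>\<^bsub>presented_group pi_rels\<^esub> pres_gen pi_rels x) = \<rho> V \<otimes>\<^bsub>Aff\<^esub> \<rho> (pres_gen pi_rels x)"
      using V(1) by (simp add: pi_group_def flip: GH.hom_mult)
    then show "D (snd (\<rho> (V \<otimes>\<^bsub>presented_group pi_rels\<^esub> pres_gen pi_rels x)))"
      using V(2) gens Aff_D_mult by simp
  next
    fix V x assume V: "V \<in> carrier (presented_group pi_rels)" "D (snd (\<rho> V))"
    have "\<rho> (V \<otimes>\<^bsub>presented_group pi_rels\<^esub> inv\<^bsub>presented_group pi_rels\<^esub> pres_gen pi_rels x)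
          = \<rho> V \<otimes>\<^bsub>Aff\<^esub> inv\<^bsub>Aff\<^esub> \<rho> (pres_gen pi_rels x)"
    proof -
      have c: "inv\<^bsub>presented_group pi_rels\<^esub> pres_gen pi_rels x \<in> carrier (presented_group pi_rels)"
        by (simp add: group.inv_closed[OF group_pres])
      have "\<rho> (V \<otimes>\<^bsub>presented_group pi_rels\<^esub> inv\<^bsub>presented_group pi_rels\<^esub> pres_gen pi_rels x)
          = \<rho> V \<otimes>\<^bsub>Aff\<^esub> \<rho> (inv\<^bsub>presented_group pi_rels\<^esub> pres_gen pi_rels x)"
        by (rule hom_mult[OF rho[unfolded pi_group_def] V(1) c])
      moreover have "\<rho> (inv\<^bsub>presented_group pi_rels\<^esub> pres_gen pi_rels x) = inv\<^bsub>Aff\<^esub> \<rho> (pres_gen pi_rels x)"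
        using GH.hom_inv[of "pres_gen pi_rels x"] by (simp add: pi_group_def)
      ultimately show ?thesis by simp
    qed
    then show "D (snd (\<rho> (V \<otimes>\<^bsub>presented_group pi_rels\<^esub> inv\<^bsub>presented_group pi_rels\<^esub> pres_gen pi_rels x)))"
      using V(2) gens Aff_D_mult Aff_D_inv by simp
  qed
qed

lemma rhob_D: "g \<in> carrier PI \<Longrightarrow> D (snd (rhob g))"
  by (rule all_D[OF rhob_hom]) (simp add: rhob_gen fb_def D_0 D_1 split: pi_gen.split)
lemma rhoa_D: "g \<in> carrier PI \<Longrightarrow> D (snd (rhoa g))"
  by (rule all_D[OF rhoa_hom]) (simp add: rhoa_gen fa_def D_0 D_1 split: pi_gen.split)

lemma rhob_tgt: "\<exists>g\<in>carrier PI. rhob g = (0, 1 / 2 ^ N)"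
proof (induction N)
  case 0 show ?case by (rule bexI[of _ gb]) (simp_all add: rhob_gen fb_def)
next
  case (Suc N)
  then obtain g where g: "g \<in> carrier PI" "rhob g = (0, 1 / 2 ^ N)" by blast
  interpret GH: group_hom PI Aff rhob
    by (simp add: group_hom_def group_hom_axioms_def group_PI group_Aff rhob_hom)
  have "rhob (inv\<^bsub>PI\<^esub> gt \<otimes>\<^bsub>PI\<^esub> g \<otimes>\<^bsub>PI\<^esub> gt) = (0, 1 / 2 ^ Suc N)"
    using g by (simp add: rhob_gen fb_def two_powr_m1)
  then show ?case using g by (intro bexI[of _ "inv\<^bsub>PI\<^esub> gt \<otimes>\<^bsub>PI\<^esub> g \<otimes>\<^bsub>PI\<^esub> gt"]) simp_all
qed

lemma rhoa_tgt: "\<exists>g\<in>carrier PI. rhoa g = (0, 1 / 2 ^ N)"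
proof (induction N)
  case 0 show ?case by (rule bexI[of _ ga]) (simp_all add: rhoa_gen fa_def)
next
  case (Suc N)
  then obtain g where g: "g \<in> carrier PI" "rhoa g = (0, 1 / 2 ^ N)" by blast
  interpret GH: group_hom PI Aff rhoa
    by (simp add: group_hom_def group_hom_axioms_def group_PI group_Aff rhoa_hom)
  have "rhoa (gt \<otimes>\<^bsub>PI\<^esub> g \<otimes>\<^bsub>PI\<^esub> inv\<^bsub>PI\<^esub> gt) = (0, 1 / 2 ^ Suc N)"
    using g by (simp add: rhoa_gen fa_def two_powr_m1)
  then show ?case using g by (intro bexI[of _ "gt \<otimes>\<^bsub>PI\<^esub> g \<otimes>\<^bsub>PI\<^esub> inv\<^bsub>PI\<^esub> gt"]) simp_all
qed

lemma core_contra: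
  assumes rho: "\<rho> \<in> hom PI Aff" and u: "u \<in> carrier PI" and Bs: "Bs \<subseteq> carrier PI"
    and allW: "\<forall>g\<in>carrier PI. group.inW PI u Bs g"
    and fu: "fst (\<rho> u) = 1" and fB: "\<forall>b\<in>Bs. fst (\<rho> b) = 0"
    and bound: "\<forall>b\<in>Bs. E M (snd (\<rho> b))"
    and g0: "g0 \<in> carrier PI" "\<rho> g0 = (0, 1 / 2 ^ Suc M)"
  shows False
proof -
  interpret G: group PI by (rule group_PI)
  interpret GH: group_hom PI Aff \<rho>
    by (simp add: group_hom_def group_hom_axioms_def group_PI group_Aff rho)
  obtain k m b where b: "b \<in> Bs" and g0e: "g0 = u [^]\<^bsub>PI\<^esub> (k::nat) \<otimes>\<^bsub>PI\<^esub> b \<otimes>\<^bsub>PI\<^esub> inv\<^bsub>PI\<^esub> (u [^]\<^bsub>PI\<^esub> (m::nat))"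
    using allW g0(1) unfolding G.inW_def by blast
  have bc: "b \<in> carrier PI" using b Bs by auto
  have r: "\<rho> g0 = \<rho> u [^]\<^bsub>Aff\<^esub> k \<otimes>\<^bsub>Aff\<^esub> \<rho> b \<otimes>\<^bsub>Aff\<^esub> inv\<^bsub>Aff\<^esub> (\<rho> u [^]\<^bsub>Aff\<^esub> m)"
    using u bc by (simp add: g0e GH.hom_nat_pow)
  have "k = m \<and> snd (\<rho> u [^]\<^bsub>Aff\<^esub> k \<otimes>\<^bsub>Aff\<^esub> \<rho> b \<otimes>\<^bsub>Aff\<^esub> inv\<^bsub>Aff\<^esub> (\<rho> u [^]\<^bsub>Aff\<^esub> m)) = 2 ^ k * snd (\<rho> b)"
    by (rule Aff_conj) (use fu fB b g0(2) r in auto)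
  then have sn: "snd (\<rho> u [^]\<^bsub>Aff\<^esub> k \<otimes>\<^bsub>Aff\<^esub> \<rho> b \<otimes>\<^bsub>Aff\<^esub> inv\<^bsub>Aff\<^esub> (\<rho> u [^]\<^bsub>Aff\<^esub> m)) = 2 ^ k * snd (\<rho> b)"
    by (rule conjunct2)
  have "snd (\<rho> g0) = 2 ^ k * snd (\<rho> b)" by (subst r) (rule sn)
  then have eq: "1 / 2 ^ Suc M = 2 ^ k * snd (\<rho> b)" using g0(2) by simp
  obtain z where z: "snd (\<rho> b) = real_of_int z / 2 ^ M" using bound b unfolding E_def by blast
  have "(1::real) = 2 * 2 ^ k * real_of_int z"
    using eq z by (simp add: field_simps)
  then have "real_of_int (2 * (2 ^ k * z)) = real_of_int 1" by simp
  then have "2 * (2 ^ k * z) = (1::int)" by (simp only: of_int_eq_iff)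
  then show False by presburger
qed


lemma group_HNN: "group (HNN Bg Ap \<theta>)"
  unfolding HNN_def by (rule group_pres)

lemma HNN_base_carrier [simp]: "HNN_base Bg Ap \<theta> x \<in> carrier (HNN Bg Ap \<theta>)"
  unfolding HNN_def HNN_base_def by simp
lemma HNN_stable_carrier [simp]: "HNN_stable Bg Ap \<theta> \<in> carrier (HNN Bg Ap \<theta>)"
  unfolding HNN_def HNN_stable_def by simp

lemma HNN_base_out: "x \<notin> carrier Bg \<Longrightarrow> HNN_base Bg Ap \<theta> x = \<one>\<^bsub>HNN Bg Ap \<theta>\<^esub>"
  unfolding HNN_def HNN_base_def pres_gen_def
  by (rule pres_class_relator) (auto simp: HNN_rels_def)

lemma HNN_base_mult:
  assumes "x \<in> carrier Bg" "y \<in> carrier Bg"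
  shows "HNN_base Bg Ap \<theta> x \<otimes>\<^bsub>HNN Bg Ap \<theta>\<^esub> HNN_base Bg Ap \<theta> y = HNN_base Bg Ap \<theta> (x \<otimes>\<^bsub>Bg\<^esub> y)"
proof -
  let ?R = "HNN_rels Bg Ap \<theta>"
  let ?H = "presented_group ?R"
  interpret G: group ?H by (rule group_pres)
  have "pres_class ?R [(Some x, True), (Some y, True), (Some (x \<otimes>\<^bsub>Bg\<^esub> y), False)] = \<one>\<^bsub>?H\<^esub>"
    by (rule pres_class_relator) (use assms in \<open>auto simp: HNN_rels_def\<close>)
  then have "pres_gen ?R (Some x) \<otimes>\<^bsub>?H\<^esub> (pres_gen ?R (Some y) \<otimes>\<^bsub>?H\<^esub>
      (inv\<^bsub>?H\<^esub> pres_gen ?R (Some (x \<otimes>\<^bsub>Bg\<^esub> y)) \<otimes>\<^bsub>?H\<^esub> \<one>\<^bsub>?H\<^esub>)) = \<one>\<^bsub>?H\<^esub>"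
    by (simp only: pres_class_Cons pres_class_Nil if_True if_False)
  then have "(pres_gen ?R (Some x) \<otimes>\<^bsub>?H\<^esub> pres_gen ?R (Some y)) \<otimes>\<^bsub>?H\<^esub>
      inv\<^bsub>?H\<^esub> pres_gen ?R (Some (x \<otimes>\<^bsub>Bg\<^esub> y)) = \<one>\<^bsub>?H\<^esub>"
    by (simp add: G.m_assoc del: one_pres)
  then have "pres_gen ?R (Some x) \<otimes>\<^bsub>?H\<^esub> pres_gen ?R (Some y) = pres_gen ?R (Some (x \<otimes>\<^bsub>Bg\<^esub> y))"
    by (metis pres_gen_carrier G.inv_closed G.m_closed G.inv_equality G.inv_inv)
  then show ?thesis unfolding HNN_def HNN_base_def .
qed

lemma HNN_conj:
  assumes "a \<in> Ap"
  shows "inv\<^bsub>HNN Bg Ap \<theta>\<^esub> HNN_stable Bg Ap \<theta> \<otimes>\<^bsub>HNN Bg Ap \<theta>\<^esub> HNN_base Bg Ap \<theta> a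
          \<otimes>\<^bsub>HNN Bg Ap \<theta>\<^esub> HNN_stable Bg Ap \<theta> = HNN_base Bg Ap \<theta> (\<theta> a)"
proof -
  let ?R = "HNN_rels Bg Ap \<theta>"
  let ?H = "presented_group ?R"
  interpret G: group ?H by (rule group_pres)
  have "pres_class ?R [(None, False), (Some a, True), (None, True), (Some (\<theta> a), False)] = \<one>\<^bsub>?H\<^esub>"
    by (rule pres_class_relator) (use assms in \<open>auto simp: HNN_rels_def\<close>)
  then have "inv\<^bsub>?H\<^esub> pres_gen ?R None \<otimes>\<^bsub>?H\<^esub> (pres_gen ?R (Some a) \<otimes>\<^bsub>?H\<^esub> (pres_gen ?R None \<otimes>\<^bsub>?H\<^esub>
      (inv\<^bsub>?H\<^esub> pres_gen ?R (Some (\<theta> a)) \<otimes>\<^bsub>?H\<^esub> \<one>\<^bsub>?H\<^esub>))) = \<one>\<^bsub>?H\<^esub>"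
    by (simp only: pres_class_Cons pres_class_Nil if_True if_False)
  then have "(inv\<^bsub>?H\<^esub> pres_gen ?R None \<otimes>\<^bsub>?H\<^esub> pres_gen ?R (Some a) \<otimes>\<^bsub>?H\<^esub> pres_gen ?R None) \<otimes>\<^bsub>?H\<^esub>
      inv\<^bsub>?H\<^esub> pres_gen ?R (Some (\<theta> a)) = \<one>\<^bsub>?H\<^esub>"
    by (simp add: G.m_assoc del: one_pres)
  then have "inv\<^bsub>?H\<^esub> pres_gen ?R None \<otimes>\<^bsub>?H\<^esub> pres_gen ?R (Some a) \<otimes>\<^bsub>?H\<^esub> pres_gen ?R None = pres_gen ?R (Some (\<theta> a))"
    by (metis pres_gen_carrier G.inv_closed G.m_closed G.inv_equality G.inv_inv)
  then show ?thesis unfolding HNN_def HNN_base_def HNN_stable_def .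
qed


lemma Aff_inv_fst: "fst (inv\<^bsub>Aff\<^esub> p) = - fst p"
  by (cases p) simp
lemma Aff_snd_mult0: "fst p = 0 \<Longrightarrow> snd (p \<otimes>\<^bsub>Aff\<^esub> q) = snd q + snd p"
  by (cases p, cases q) simp
lemma Aff_snd_inv0: "fst p = 0 \<Longrightarrow> snd (inv\<^bsub>Aff\<^esub> p) = - snd p"
  by (cases p) simp

lemma part2:
  fixes \<phi> :: "pi_gen word set \<Rightarrow> int" and Bg :: "('b, 'm) monoid_scheme"
  assumes phi: "phi_setup \<phi>"
    and Bg: "group Bg" and fg: "fin_gen Bg" and sAp: "subgroup Ap Bg" and sAm: "subgroup Am Bg"
    and th: "\<theta> \<in> iso (Bg\<lparr>carrier := Ap\<rparr>) (Bg\<lparr>carrier := Am\<rparr>)"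
    and asc: "Ap = carrier Bg \<or> Am = carrier Bg"
    and psi: "\<psi> \<in> iso (HNN Bg Ap \<theta>) pi_group"
    and ps: "\<phi> (\<psi> (HNN_stable Bg Ap \<theta>)) = 1"
    and pb: "\<forall>x \<in> carrier Bg. \<phi> (\<psi> (HNN_base Bg Ap \<theta> x)) = 0"
  shows False
proof -
  interpret phi_setup \<phi> by (rule phi)
  interpret Bg: group Bg by (rule Bg)
  interpret H: group "HNN Bg Ap \<theta>" by (rule group_HNN)
  interpret P: group PI by (rule group_PI)
  have psih: "\<psi> \<in> hom (HNN Bg Ap \<theta>) PI" and psib: "bij_betw \<psi> (carrier (HNN Bg Ap \<theta>)) (carrier PI)"
    using psi by (auto simp: iso_def)
  interpret PH: group_hom "HNN Bg Ap \<theta>" PI \<psi>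
    by (simp add: group_hom_def group_hom_axioms_def H.group_axioms P.group_axioms psih)
  define \<beta> where "\<beta> x = \<psi> (HNN_base Bg Ap \<theta> x)" for x
  define s where "s = \<psi> (HNN_stable Bg Ap \<theta>)"
  define Bs where "Bs = \<beta> ` carrier Bg"
  have \<beta>c [simp]: "\<beta> x \<in> carrier PI" for x unfolding \<beta>_def by simp
  have sc [simp]: "s \<in> carrier PI" unfolding s_def by simp
  have \<beta>m: "\<beta> (x \<otimes>\<^bsub>Bg\<^esub> y) = \<beta> x \<otimes>\<^bsub>PI\<^esub> \<beta> y" if "x \<in> carrier Bg" "y \<in> carrier Bg" for x y
    unfolding \<beta>_def using that by (simp flip: HNN_base_mult)
  have \<beta>1: "\<beta> \<one>\<^bsub>Bg\<^esub> = \<one>\<^bsub>PI\<^esub>"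
  proof -
    have "\<beta> \<one>\<^bsub>Bg\<^esub> \<otimes>\<^bsub>PI\<^esub> \<beta> \<one>\<^bsub>Bg\<^esub> = \<beta> \<one>\<^bsub>Bg\<^esub> \<otimes>\<^bsub>PI\<^esub> \<one>\<^bsub>PI\<^esub>"
      using \<beta>m[of "\<one>\<^bsub>Bg\<^esub>" "\<one>\<^bsub>Bg\<^esub>"] by simp
    then show ?thesis by simp
  qed
  have \<beta>i: "\<beta> (inv\<^bsub>Bg\<^esub> x) = inv\<^bsub>PI\<^esub> \<beta> x" if "x \<in> carrier Bg" for x
  proof -
    have "\<beta> (inv\<^bsub>Bg\<^esub> x) \<otimes>\<^bsub>PI\<^esub> \<beta> x = \<one>\<^bsub>PI\<^esub>"
      using \<beta>m[of "inv\<^bsub>Bg\<^esub> x" x] that \<beta>1 by simp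
    then show ?thesis by (simp add: P.inv_equality)
  qed
  have \<beta>out: "\<beta> x = \<one>\<^bsub>PI\<^esub>" if "x \<notin> carrier Bg" for x
    unfolding \<beta>_def using that by (simp add: HNN_base_out)
  have sconj: "inv\<^bsub>PI\<^esub> s \<otimes>\<^bsub>PI\<^esub> \<beta> a \<otimes>\<^bsub>PI\<^esub> s = \<beta> (\<theta> a)" if "a \<in> Ap" for a
  proof -
    have "\<psi> (inv\<^bsub>HNN Bg Ap \<theta>\<^esub> HNN_stable Bg Ap \<theta> \<otimes>\<^bsub>HNN Bg Ap \<theta>\<^esub> HNN_base Bg Ap \<theta> a
          \<otimes>\<^bsub>HNN Bg Ap \<theta>\<^esub> HNN_stable Bg Ap \<theta>) = \<beta> (\<theta> a)"
      unfolding \<beta>_def using HNN_conj[where Bg=Bg and \<theta>=\<theta>, OF that] by simp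
    then show ?thesis unfolding s_def \<beta>_def by simp
  qed
  have thb: "bij_betw \<theta> Ap Am" using th by (simp add: iso_def)
  have ApB: "Ap \<subseteq> carrier Bg" and AmB: "Am \<subseteq> carrier Bg"
    using sAp sAm by (auto dest: subgroup.subset)
  have BsC: "Bs \<subseteq> carrier PI" unfolding Bs_def by auto
  have Bs1: "\<one>\<^bsub>PI\<^esub> \<in> Bs" unfolding Bs_def using \<beta>1 by force
  have Bsm: "\<forall>x\<in>Bs. \<forall>y\<in>Bs. x \<otimes>\<^bsub>PI\<^esub> y \<in> Bs"
    unfolding Bs_def using \<beta>m by (auto intro!: image_eqI)
  have Bsi: "inv\<^bsub>PI\<^esub> b \<in> Bs" if "b \<in> Bs" for b
    using that \<beta>i unfolding Bs_def by (auto intro!: image_eqI)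
  have fBphi: "\<phi> b = 0" if "b \<in> Bs" for b using that pb unfolding Bs_def \<beta>_def by auto
  have "\<exists>u \<rho>. u \<in> carrier PI \<and> \<rho> \<in> hom PI Aff \<and> (s = u \<or> s = inv\<^bsub>PI\<^esub> u)
          \<and> (\<forall>b\<in>Bs. inv\<^bsub>PI\<^esub> u \<otimes>\<^bsub>PI\<^esub> b \<otimes>\<^bsub>PI\<^esub> u \<in> Bs)
          \<and> fst (\<rho> u) = 1 \<and> (\<forall>b\<in>Bs. fst (\<rho> b) = 0)
          \<and> (\<forall>g\<in>carrier PI. D (snd (\<rho> g)))
          \<and> (\<forall>N. \<exists>g\<in>carrier PI. \<rho> g = (0, 1 / 2 ^ N))"
  proof (cases "Ap = carrier Bg")
    case True
    have cj: "\<forall>b\<in>Bs. inv\<^bsub>PI\<^esub> s \<otimes>\<^bsub>PI\<^esub> b \<otimes>\<^bsub>PI\<^esub> s \<in> Bs"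
    proof
      fix b assume "b \<in> Bs"
      then obtain a where a: "a \<in> carrier Bg" "b = \<beta> a" unfolding Bs_def by blast
      then have "\<theta> a \<in> Am" using thb True by (auto dest: bij_betwE)
      then show "inv\<^bsub>PI\<^esub> s \<otimes>\<^bsub>PI\<^esub> b \<otimes>\<^bsub>PI\<^esub> s \<in> Bs"
        using sconj[of a] a True AmB unfolding Bs_def by auto
    qed
    show ?thesis
      apply (rule exI[of _ s], rule exI[of _ rhob])
      using cj rhob_hom phi_rhob[of s] ps s_def fBphi phi_rhob BsC rhob_D rhob_tgt
      by (auto simp: subset_iff)
  next
    case False
    then have Am: "Am = carrier Bg" using asc by simp
    have cj: "\<forall>b\<in>Bs. inv\<^bsub>PI\<^esub> (inv\<^bsub>PI\<^esub> s) \<otimes>\<^bsub>PI\<^esub> b \<otimes>\<^bsub>PI\<^esub> inv\<^bsub>PI\<^esub> s \<in> Bs"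
    proof
      fix b assume "b \<in> Bs"
      then obtain y where y: "y \<in> carrier Bg" "b = \<beta> y" unfolding Bs_def by blast
      then obtain a where a: "a \<in> Ap" "y = \<theta> a" using thb Am by (auto simp: bij_betw_def)
      have "inv\<^bsub>PI\<^esub> (inv\<^bsub>PI\<^esub> s) \<otimes>\<^bsub>PI\<^esub> b \<otimes>\<^bsub>PI\<^esub> inv\<^bsub>PI\<^esub> s
            = s \<otimes>\<^bsub>PI\<^esub> (inv\<^bsub>PI\<^esub> s \<otimes>\<^bsub>PI\<^esub> \<beta> a \<otimes>\<^bsub>PI\<^esub> s) \<otimes>\<^bsub>PI\<^esub> inv\<^bsub>PI\<^esub> s"
        using sconj[OF a(1)] y a by simp
      also have "\<dots> = \<beta> a" by (simp add: P.m_assoc P.cancel_l1)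
      finally show "inv\<^bsub>PI\<^esub> (inv\<^bsub>PI\<^esub> s) \<otimes>\<^bsub>PI\<^esub> b \<otimes>\<^bsub>PI\<^esub> inv\<^bsub>PI\<^esub> s \<in> Bs"
        using a ApB unfolding Bs_def by auto
    qed
    interpret GA: group_hom PI Aff rhoa
      by (simp add: group_hom_def group_hom_axioms_def group_PI group_Aff rhoa_hom)
    have fu: "fst (rhoa (inv\<^bsub>PI\<^esub> s)) = 1"
      using phi_rhoa[of s] ps by (simp add: Aff_inv_fst s_def)
    show ?thesis
      apply (rule exI[of _ "inv\<^bsub>PI\<^esub> s"], rule exI[of _ rhoa])
      using cj rhoa_hom fu fBphi phi_rhoa BsC rhoa_D rhoa_tgt
      by (auto simp: subset_iff)
  qed
  then obtain u \<rho> where u: "u \<in> carrier PI" and rho: "\<rho> \<in> hom PI Aff" and su: "s = u \<or> s = inv\<^bsub>PI\<^esub> u"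
    and cj: "\<forall>b\<in>Bs. inv\<^bsub>PI\<^esub> u \<otimes>\<^bsub>PI\<^esub> b \<otimes>\<^bsub>PI\<^esub> u \<in> Bs"
    and fu: "fst (\<rho> u) = 1" and fB: "\<forall>b\<in>Bs. fst (\<rho> b) = 0"
    and Dall: "\<forall>g\<in>carrier PI. D (snd (\<rho> g))"
    and tgt: "\<forall>N. \<exists>g\<in>carrier PI. \<rho> g = (0, 1 / 2 ^ N)" by blast
  interpret GR: group_hom PI Aff \<rho>
    by (simp add: group_hom_def group_hom_axioms_def group_PI group_Aff rho)
  have Ws: "P.inW u Bs (g \<otimes>\<^bsub>PI\<^esub> s) \<and> P.inW u Bs (g \<otimes>\<^bsub>PI\<^esub> inv\<^bsub>PI\<^esub> s)" if "P.inW u Bs g" for g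
    using su P.inW_mult_u[OF u BsC cj that] P.inW_mult_inv_u[OF u BsC that] u by auto
  have WH: "P.inW u Bs (\<psi> U)" if "U \<in> carrier (HNN Bg Ap \<theta>)" for U
    using that unfolding HNN_def
  proof (rule pres_elem_induct)
    show "P.inW u Bs (\<psi> \<one>\<^bsub>presented_group (HNN_rels Bg Ap \<theta>)\<^esub>)"
      using PH.hom_one P.inW_one[OF Bs1 u] by (simp add: HNN_def del: one_pres)
  next
    fix V x assume V: "V \<in> carrier (presented_group (HNN_rels Bg Ap \<theta>))" "P.inW u Bs (\<psi> V)"
    have Vc: "V \<in> carrier (HNN Bg Ap \<theta>)" using V(1) by (simp add: HNN_def)
    have e: "\<psi> (V \<otimes>\<^bsub>presented_group (HNN_rels Bg Ap \<theta>)\<^esub> pres_gen (HNN_rels Bg Ap \<theta>) x)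
           = \<psi> V \<otimes>\<^bsub>PI\<^esub> \<psi> (pres_gen (HNN_rels Bg Ap \<theta>) x)"
      using PH.hom_mult[OF Vc, of "pres_gen (HNN_rels Bg Ap \<theta>) x"] by (simp add: HNN_def)
    show "P.inW u Bs (\<psi> (V \<otimes>\<^bsub>presented_group (HNN_rels Bg Ap \<theta>)\<^esub> pres_gen (HNN_rels Bg Ap \<theta>) x))"
    proof (cases x)
      case None
      then show ?thesis using e Ws[OF V(2)] by (simp add: s_def HNN_stable_def)
    next
      case (Some y)
      have g: "\<psi> (pres_gen (HNN_rels Bg Ap \<theta>) x) = \<beta> y" by (simp add: Some \<beta>_def HNN_base_def)
      show ?thesis
      proof (cases "y \<in> carrier Bg")
        case True
        then have "\<beta> y \<in> Bs" unfolding Bs_def by blast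
        then show ?thesis using e g P.inW_mult_B[OF u BsC cj Bsm V(2)] by simp
      next
        case False
        then show ?thesis using e g \<beta>out V(2) PH.hom_closed[OF Vc] by simp
      qed
    qed
  next
    fix V x assume V: "V \<in> carrier (presented_group (HNN_rels Bg Ap \<theta>))" "P.inW u Bs (\<psi> V)"
    have Vc: "V \<in> carrier (HNN Bg Ap \<theta>)" using V(1) by (simp add: HNN_def)
    have gc: "pres_gen (HNN_rels Bg Ap \<theta>) x \<in> carrier (HNN Bg Ap \<theta>)" by (simp add: HNN_def)
    have e: "\<psi> (V \<otimes>\<^bsub>presented_group (HNN_rels Bg Ap \<theta>)\<^esub> inv\<^bsub>presented_group (HNN_rels Bg Ap \<theta>)\<^esub> pres_gen (HNN_rels Bg Ap \<theta>) x)
           = \<psi> V \<otimes>\<^bsub>PI\<^esub> inv\<^bsub>PI\<^esub> \<psi> (pres_gen (HNN_rels Bg Ap \<theta>) x)"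
      using PH.hom_mult[OF Vc H.inv_closed[OF gc]] PH.hom_inv[OF gc] by (simp add: HNN_def)
    show "P.inW u Bs (\<psi> (V \<otimes>\<^bsub>presented_group (HNN_rels Bg Ap \<theta>)\<^esub> inv\<^bsub>presented_group (HNN_rels Bg Ap \<theta>)\<^esub> pres_gen (HNN_rels Bg Ap \<theta>) x))"
    proof (cases x)
      case None
      then show ?thesis using e Ws[OF V(2)] by (simp add: s_def HNN_stable_def)
    next
      case (Some y)
      have g: "\<psi> (pres_gen (HNN_rels Bg Ap \<theta>) x) = \<beta> y" by (simp add: Some \<beta>_def HNN_base_def)
      show ?thesis
      proof (cases "y \<in> carrier Bg")
        case True
        then have "inv\<^bsub>PI\<^esub> \<beta> y \<in> Bs" using Bsi unfolding Bs_def by blast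
        then show ?thesis using e g P.inW_mult_B[OF u BsC cj Bsm V(2)] by simp
      next
        case False
        then show ?thesis using e g \<beta>out V(2) PH.hom_closed[OF Vc] by simp
      qed
    qed
  qed
  have allW: "\<forall>g\<in>carrier PI. P.inW u Bs g"
  proof
    fix g assume "g \<in> carrier PI"
    then obtain U where "U \<in> carrier (HNN Bg Ap \<theta>)" "g = \<psi> U"
      using psib by (auto simp: bij_betw_def)
    then show "P.inW u Bs g" using WH by simp
  qed
  obtain S where S: "finite S" "S \<subseteq> carrier Bg" "generate Bg S = carrier Bg"
    using fg unfolding fin_gen_def by blast
  define Mf where "Mf x = (SOME M. E M (snd (\<rho> (\<beta> x))))" for x
  define M0 where "M0 = Max (insert 0 (Mf ` S))"
  have ES: "E M0 (snd (\<rho> (\<beta> x)))" if "x \<in> S" for x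
  proof -
    have "D (snd (\<rho> (\<beta> x)))" using Dall by simp
    then have "E (Mf x) (snd (\<rho> (\<beta> x)))" unfolding D_def Mf_def by (rule someI_ex)
    moreover have "Mf x \<le> M0" unfolding M0_def using S(1) that by auto
    ultimately show ?thesis by (rule E_mono)
  qed
  have fB': "fst (\<rho> (\<beta> x)) = 0" if "x \<in> carrier Bg" for x
    using fB that unfolding Bs_def by blast
  have EG: "E M0 (snd (\<rho> (\<beta> x)))" if "x \<in> generate Bg S" for x
    using that
  proof (induction rule: generate.induct)
    case one
    then show ?case using \<beta>1 GR.hom_one by (simp add: E_zero)
  next
    case (incl h) then show ?case by (rule ES)
  next
    case (inv h)
    then have hc: "h \<in> carrier Bg" using S by auto
    then show ?case using \<beta>i[OF hc] ES[OF inv] fB'[OF hc] by (simp add: Aff_snd_inv0 E_neg)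
  next
    case (eng h1 h2)
    have c: "h1 \<in> carrier Bg" "h2 \<in> carrier Bg"
      using eng.hyps S(2) Bg.generate_in_carrier by blast+
    then show ?case using \<beta>m[OF c] eng.IH fB'[OF c(1)] by (simp add: Aff_snd_mult0 E_add)
  qed
  have bound: "\<forall>b\<in>Bs. E M0 (snd (\<rho> b))"
    unfolding Bs_def using EG S(3) by auto
  obtain g0 where g0: "g0 \<in> carrier PI" "\<rho> g0 = (0, 1 / 2 ^ Suc M0)" using tgt by blast
  show False by (rule core_contra[OF rho u BsC allW fu fB bound g0])
qed


lemma (in group) subgroup_pow_closed:
  assumes "subgroup H G" "x \<in> H" shows "x [^] (n::nat) \<in> H"
proof (induction n)
  case 0 then show ?case using assms by (simp add: subgroup.one_closed)
next
  case (Suc n) then show ?case using assms by (simp add: subgroup.m_closed)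
qed

context group
begin

definition cjg :: "'a \<Rightarrow> nat \<Rightarrow> 'a \<Rightarrow> 'a" where
  "cjg t r x = inv (t [^] r) \<otimes> x \<otimes> t [^] r"

lemma cjg_mult: "t \<in> carrier G \<Longrightarrow> x \<in> carrier G \<Longrightarrow> y \<in> carrier G \<Longrightarrow>
    cjg t r (x \<otimes> y) = cjg t r x \<otimes> cjg t r y"
  unfolding cjg_def by (simp add: m_assoc cancel_l1)

lemma cjg_carrier [simp]: "t \<in> carrier G \<Longrightarrow> x \<in> carrier G \<Longrightarrow> cjg t r x \<in> carrier G"
  unfolding cjg_def by simp

lemma cjg_inv: "t \<in> carrier G \<Longrightarrow> x \<in> carrier G \<Longrightarrow> cjg t r (inv x) = inv (cjg t r x)"
  unfolding cjg_def by (simp add: inv_mult_group m_assoc)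

lemma cjg_pow: "t \<in> carrier G \<Longrightarrow> x \<in> carrier G \<Longrightarrow> cjg t r (x [^] (n::nat)) = cjg t r x [^] n"
proof (induction n)
  case 0 then show ?case by (simp add: cjg_def)
next
  case (Suc n) then show ?case by (simp add: cjg_mult)
qed

lemma cjg_Suc: "t \<in> carrier G \<Longrightarrow> x \<in> carrier G \<Longrightarrow> cjg t (Suc r) x = cjg t r (inv t \<otimes> x \<otimes> t)"
proof -
  assume t: "t \<in> carrier G" and x: "x \<in> carrier G"
  have e: "t [^] Suc r = t \<otimes> t [^] r" by (rule nat_pow_Suc2[OF t])
  show ?thesis unfolding cjg_def e using t x by (simp add: inv_mult_group m_assoc)
qed

lemma cjg_split: "t \<in> carrier G \<Longrightarrow> h \<in> carrier G \<Longrightarrow> x \<in> carrier G \<Longrightarrow>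
    h \<otimes> inv (t [^] (r::nat)) \<otimes> x = (h \<otimes> cjg t r x) \<otimes> inv (t [^] r)"
  unfolding cjg_def by (simp add: m_assoc)

end

lemma pow_double: "group G \<Longrightarrow> x \<in> carrier G \<Longrightarrow> (x [^]\<^bsub>G\<^esub> (2 ^ r :: nat)) \<otimes>\<^bsub>G\<^esub> (x [^]\<^bsub>G\<^esub> (2 ^ r :: nat)) = x [^]\<^bsub>G\<^esub> (2 ^ Suc r :: nat)"
  by (simp add: group.is_monoid monoid.nat_pow_mult mult_2)

lemma PI_cj_a: "group.cjg PI gt r ga = ga [^]\<^bsub>PI\<^esub> (2 ^ r :: nat)"
proof -
  interpret P: group PI by (rule group_PI)
  show ?thesis
  proof (induction r)
    case 0 then show ?case by (simp add: P.cjg_def)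
  next
    case (Suc r)
    have "P.cjg gt (Suc r) ga = P.cjg gt r (ga \<otimes>\<^bsub>PI\<^esub> ga)"
      using P.cjg_Suc[of gt ga r] PI_rel1 by simp
    also have "\<dots> = P.cjg gt r ga \<otimes>\<^bsub>PI\<^esub> P.cjg gt r ga" by (simp add: P.cjg_mult)
    finally show ?case using Suc pow_double[OF group_PI, of ga r] by simp
  qed
qed

lemma PI_cj_b_step: "group.cjg PI gt r gb = group.cjg PI gt (Suc r) gb [^]\<^bsub>PI\<^esub> (2::nat)"
proof -
  interpret P: group PI by (rule group_PI)
  have "P.cjg gt (Suc r) (gb \<otimes>\<^bsub>PI\<^esub> gb) = P.cjg gt r gb"
    using P.cjg_Suc[of gt "gb \<otimes>\<^bsub>PI\<^esub> gb" r] PI_rel2 by simp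
  then show ?thesis by (simp add: P.cjg_mult numeral_2_eq_2)
qed

lemma PI_cj_b:
  assumes "d \<le> j"
  shows "group.cjg PI gt (j - d) gb = group.cjg PI gt j gb [^]\<^bsub>PI\<^esub> (2 ^ d :: nat)"
  using assms
proof (induction d)
  case 0
  interpret P: group PI by (rule group_PI)
  show ?case by (simp add: P.cjg_def)
next
  case (Suc d)
  interpret P: group PI by (rule group_PI)
  have e: "Suc (j - Suc d) = j - d" using Suc.prems by simp
  have "P.cjg gt (j - Suc d) gb = P.cjg gt (j - d) gb [^]\<^bsub>PI\<^esub> (2::nat)"
    using PI_cj_b_step[of "j - Suc d"] e by simp
  also have "\<dots> = (P.cjg gt j gb [^]\<^bsub>PI\<^esub> (2 ^ d :: nat)) [^]\<^bsub>PI\<^esub> (2::nat)"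
    using Suc by simp
  also have "\<dots> = P.cjg gt j gb [^]\<^bsub>PI\<^esub> (2 ^ Suc d :: nat)"
    by (simp add: P.nat_pow_pow P.cjg_def mult.commute)
  finally show ?case .
qed


context phi_setup
begin

lemma phi_gh: "group_hom PI integer_group \<phi>"
  by (simp add: group_hom_def group_hom_axioms_def group_PI phi_hom)

lemma phi_mult: "x \<in> carrier PI \<Longrightarrow> y \<in> carrier PI \<Longrightarrow> \<phi> (x \<otimes>\<^bsub>PI\<^esub> y) = \<phi> x + \<phi> y"
  using hom_mult[OF phi_hom] by simp

lemma phi_inv: "x \<in> carrier PI \<Longrightarrow> \<phi> (inv\<^bsub>PI\<^esub> x) = - \<phi> x"
  using group_hom.hom_inv[OF phi_gh] by simp

lemma phi_pow: "x \<in> carrier PI \<Longrightarrow> \<phi> (x [^]\<^bsub>PI\<^esub> (n::nat)) = int n * \<phi> x"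
  using group_hom.hom_nat_pow[OF phi_gh] by simp

lemma K_subgroup: "subgroup (phi_kernel PI \<phi> i) PI"
proof -
  interpret P: group PI by (rule group_PI)
  show ?thesis
  proof (rule P.subgroupI)
    show "phi_kernel PI \<phi> i \<subseteq> carrier PI" unfolding phi_kernel_def by auto
    have "\<one>\<^bsub>PI\<^esub> \<in> phi_kernel PI \<phi> i" unfolding phi_kernel_def
      using group_hom.hom_one[OF phi_gh] by simp
    then show "phi_kernel PI \<phi> i \<noteq> {}" by blast
  next
    fix a assume "a \<in> phi_kernel PI \<phi> i"
    then show "inv\<^bsub>PI\<^esub> a \<in> phi_kernel PI \<phi> i"
      unfolding phi_kernel_def by (auto simp: phi_inv simp flip: dvd_eq_mod_eq_0)
  next
    fix a b assume "a \<in> phi_kernel PI \<phi> i" "b \<in> phi_kernel PI \<phi> i"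
    then show "a \<otimes>\<^bsub>PI\<^esub> b \<in> phi_kernel PI \<phi> i"
      unfolding phi_kernel_def by (auto simp: phi_mult simp flip: dvd_eq_mod_eq_0)
  qed
qed

lemma gen_kernel:
  assumes i: "i \<ge> 1"
  shows "generate PI {gt [^]\<^bsub>PI\<^esub> i, ga, group.cjg PI gt (i - 1) gb} = phi_kernel PI \<phi> i"
proof -
  interpret P: group PI by (rule group_PI)
  define c where "c = P.cjg gt (i - 1) gb"
  define S where "S = {gt [^]\<^bsub>PI\<^esub> i, ga, c}"
  define H where "H = generate PI S"
  have Sc: "S \<subseteq> carrier PI" unfolding S_def c_def by simp
  have Hs: "subgroup H PI" unfolding H_def by (rule P.generate_is_subgroup[OF Sc])
  have SH: "x \<in> H" if "x \<in> S" for x unfolding H_def using that by (rule generate.incl)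
  have cc: "c \<in> carrier PI" unfolding c_def by simp
  have SK: "S \<subseteq> phi_kernel PI \<phi> i"
  proof -
    have "\<phi> c = 0" unfolding c_def P.cjg_def by (simp add: phi_mult phi_inv phiB)
    then show ?thesis unfolding S_def phi_kernel_def using cc by (auto simp: phi_pow phiT phiA)
  qed
  have HK: "H \<subseteq> phi_kernel PI \<phi> i"
    unfolding H_def by (rule P.generate_subgroup_incl[OF SK K_subgroup])
  have Hc: "H \<subseteq> carrier PI" using Hs by (rule subgroup.subset)
  define Q where "Q g \<longleftrightarrow> (\<exists>h\<in>H. \<exists>r<i. g = h \<otimes>\<^bsub>PI\<^esub> inv\<^bsub>PI\<^esub> (gt [^]\<^bsub>PI\<^esub> r))" for g
  have Qsplit: "Q (g \<otimes>\<^bsub>PI\<^esub> x)" if qg: "Q g" and xc: "x \<in> carrier PI" and cj: "\<And>r. r < i \<Longrightarrow> P.cjg gt r x \<in> H" for g x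
  proof -
    obtain h r where h: "h \<in> H" "r < i" "g = h \<otimes>\<^bsub>PI\<^esub> inv\<^bsub>PI\<^esub> (gt [^]\<^bsub>PI\<^esub> r)"
      using qg unfolding Q_def by blast
    have "g \<otimes>\<^bsub>PI\<^esub> x = (h \<otimes>\<^bsub>PI\<^esub> P.cjg gt r x) \<otimes>\<^bsub>PI\<^esub> inv\<^bsub>PI\<^esub> (gt [^]\<^bsub>PI\<^esub> r)"
      using P.cjg_split[of gt h x r] h(1) Hc xc h(3) by auto
    moreover have "h \<otimes>\<^bsub>PI\<^esub> P.cjg gt r x \<in> H"
      using subgroup.m_closed[OF Hs h(1) cj[OF h(2)]] .
    ultimately show ?thesis unfolding Q_def using h(2) by blast
  qed
  have cja: "P.cjg gt r ga \<in> H" for r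
    using PI_cj_a[of r] P.subgroup_pow_closed[OF Hs SH[of ga]] by (simp add: S_def)
  have cjb: "P.cjg gt r gb \<in> H" if "r < i" for r
  proof -
    have "P.cjg gt r gb = c [^]\<^bsub>PI\<^esub> (2 ^ (i - 1 - r) :: nat)"
      using PI_cj_b[of "i - 1 - r" "i - 1"] that unfolding c_def by simp
    then show ?thesis using P.subgroup_pow_closed[OF Hs SH[of c]] by (simp add: S_def)
  qed
  have Qall: "Q g" if "g \<in> carrier PI" for g
    using that unfolding pi_group_def
  proof (rule pres_elem_induct)
    have "\<one>\<^bsub>PI\<^esub> = \<one>\<^bsub>PI\<^esub> \<otimes>\<^bsub>PI\<^esub> inv\<^bsub>PI\<^esub> (gt [^]\<^bsub>PI\<^esub> (0::nat))" by simp
    then have "Q \<one>\<^bsub>PI\<^esub>"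
      unfolding Q_def using subgroup.one_closed[OF Hs] i by (metis less_le_trans zero_less_one)
    then show "Q \<one>\<^bsub>presented_group pi_rels\<^esub>" by (simp only: pi_group_def)
  next
    fix V x assume V: "V \<in> carrier (presented_group pi_rels)" "Q V"
    show "Q (V \<otimes>\<^bsub>presented_group pi_rels\<^esub> pres_gen pi_rels x)"
    proof (cases x)
      case A then show ?thesis using Qsplit[OF V(2), of ga] cja by (simp add: pi_group_def)
    next
      case B then show ?thesis using Qsplit[OF V(2), of gb] cjb by (simp add: pi_group_def)
    next
      case T
      obtain h r where h: "h \<in> H" "r < i" "V = h \<otimes>\<^bsub>PI\<^esub> inv\<^bsub>PI\<^esub> (gt [^]\<^bsub>PI\<^esub> r)"
        using V(2) unfolding Q_def by blast
      have hc: "h \<in> carrier PI" using h(1) Hc by auto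
      show ?thesis
      proof (cases r)
        case 0
        obtain i' where i': "i = Suc i'" using i by (cases i) auto
        have "gt [^]\<^bsub>PI\<^esub> i = gt \<otimes>\<^bsub>PI\<^esub> gt [^]\<^bsub>PI\<^esub> i'"
          unfolding i' by (rule P.nat_pow_Suc2) simp
        then have eq: "V \<otimes>\<^bsub>PI\<^esub> gt = (h \<otimes>\<^bsub>PI\<^esub> gt [^]\<^bsub>PI\<^esub> i) \<otimes>\<^bsub>PI\<^esub> inv\<^bsub>PI\<^esub> (gt [^]\<^bsub>PI\<^esub> i')"
          using hc by (simp add: h(3) 0 P.m_assoc)
        have hh: "h \<otimes>\<^bsub>PI\<^esub> gt [^]\<^bsub>PI\<^esub> i \<in> H"
          using subgroup.m_closed[OF Hs h(1) SH[of "gt [^]\<^bsub>PI\<^esub> i"]] by (simp add: S_def)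
        have q: "Q (V \<otimes>\<^bsub>PI\<^esub> gt)" unfolding Q_def
          by (rule bexI[OF exI[of _ i'] hh]) (use eq i' in simp)
        show ?thesis using T q by (simp only: pi_group_def)
      next
        case (Suc r')
        have "gt [^]\<^bsub>PI\<^esub> r = gt \<otimes>\<^bsub>PI\<^esub> gt [^]\<^bsub>PI\<^esub> r'"
          unfolding Suc by (rule P.nat_pow_Suc2) simp
        then have eq: "V \<otimes>\<^bsub>PI\<^esub> gt = h \<otimes>\<^bsub>PI\<^esub> inv\<^bsub>PI\<^esub> (gt [^]\<^bsub>PI\<^esub> r')"
          using hc by (simp add: h(3) P.m_assoc P.inv_mult_group del: P.nat_pow_Suc)
        have q: "Q (V \<otimes>\<^bsub>PI\<^esub> gt)" unfolding Q_def
          by (rule bexI[OF exI[of _ r'] h(1)]) (use eq h(2) Suc in simp)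
        show ?thesis using T q by (simp only: pi_group_def)
      qed
    qed
  next
    fix V x assume V: "V \<in> carrier (presented_group pi_rels)" "Q V"
    show "Q (V \<otimes>\<^bsub>presented_group pi_rels\<^esub> inv\<^bsub>presented_group pi_rels\<^esub> pres_gen pi_rels x)"
    proof (cases x)
      case A then show ?thesis using Qsplit[OF V(2), of "inv\<^bsub>PI\<^esub> ga"] cja
          P.cjg_inv[of gt ga] subgroup.m_inv_closed[OF Hs] P.inv_closed[OF PI_gens(2)] by (simp add: pi_group_def)
    next
      case B then show ?thesis using Qsplit[OF V(2), of "inv\<^bsub>PI\<^esub> gb"] cjb
          P.cjg_inv[of gt gb] subgroup.m_inv_closed[OF Hs] P.inv_closed[OF PI_gens(3)] by (simp add: pi_group_def)
    next
      case T
      obtain h r where h: "h \<in> H" "r < i" "V = h \<otimes>\<^bsub>PI\<^esub> inv\<^bsub>PI\<^esub> (gt [^]\<^bsub>PI\<^esub> r)"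
        using V(2) unfolding Q_def by blast
      have hc: "h \<in> carrier PI" using h(1) Hc by auto
      have "gt [^]\<^bsub>PI\<^esub> Suc r = gt \<otimes>\<^bsub>PI\<^esub> gt [^]\<^bsub>PI\<^esub> r"
        by (rule P.nat_pow_Suc2) simp
      then have e: "V \<otimes>\<^bsub>PI\<^esub> inv\<^bsub>PI\<^esub> gt = h \<otimes>\<^bsub>PI\<^esub> inv\<^bsub>PI\<^esub> (gt [^]\<^bsub>PI\<^esub> Suc r)"
        using hc by (simp add: h(3) P.m_assoc P.inv_mult_group del: P.nat_pow_Suc)
      show ?thesis
      proof (cases "Suc r < i")
        case True
        have q: "Q (V \<otimes>\<^bsub>PI\<^esub> inv\<^bsub>PI\<^esub> gt)" unfolding Q_def
          by (rule bexI[OF exI[of _ "Suc r"] h(1)]) (use e True in simp)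
        show ?thesis using T q by (simp only: pi_group_def)
      next
        case False
        then have ri: "Suc r = i" using h(2) by simp
        have hh: "h \<otimes>\<^bsub>PI\<^esub> inv\<^bsub>PI\<^esub> (gt [^]\<^bsub>PI\<^esub> i) \<in> H"
          using subgroup.m_closed[OF Hs h(1) subgroup.m_inv_closed[OF Hs SH[of "gt [^]\<^bsub>PI\<^esub> i"]]]
          by (simp add: S_def)
        have eq: "V \<otimes>\<^bsub>PI\<^esub> inv\<^bsub>PI\<^esub> gt = (h \<otimes>\<^bsub>PI\<^esub> inv\<^bsub>PI\<^esub> (gt [^]\<^bsub>PI\<^esub> i)) \<otimes>\<^bsub>PI\<^esub> inv\<^bsub>PI\<^esub> (gt [^]\<^bsub>PI\<^esub> (0::nat))"
          using e ri hc by simp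
        have q: "Q (V \<otimes>\<^bsub>PI\<^esub> inv\<^bsub>PI\<^esub> gt)" unfolding Q_def
          by (rule bexI[OF exI[of _ 0] hh]) (use eq i in simp)
        show ?thesis using T q by (simp only: pi_group_def)
      qed
    qed
  qed
  have KH: "phi_kernel PI \<phi> i \<subseteq> H"
  proof
    fix g assume g: "g \<in> phi_kernel PI \<phi> i"
    then have gc: "g \<in> carrier PI" unfolding phi_kernel_def by auto
    obtain h r where h: "h \<in> H" "r < i" "g = h \<otimes>\<^bsub>PI\<^esub> inv\<^bsub>PI\<^esub> (gt [^]\<^bsub>PI\<^esub> r)"
      using Qall[OF gc] unfolding Q_def by blast
    have hc: "h \<in> carrier PI" using h(1) Hc by auto
    have "\<phi> g = \<phi> h - int r" using hc by (simp add: h(3) phi_mult phi_inv phi_pow phiT)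
    moreover have "int i dvd \<phi> g" using g unfolding phi_kernel_def by (simp add: dvd_eq_mod_eq_0)
    moreover have "int i dvd \<phi> h" using HK h(1) unfolding phi_kernel_def by (auto simp: dvd_eq_mod_eq_0)
    ultimately have d1: "int i dvd \<phi> h - \<phi> g" using dvd_diff by blast
    have e: "\<phi> h - \<phi> g = int r" using \<open>\<phi> g = \<phi> h - int r\<close> by simp
    have "int i dvd int r" using d1 by (simp only: e)
    then have "i dvd r" by simp
    have "r = 0"
    proof (rule ccontr)
      assume "r \<noteq> 0"
      then have "i \<le> r" using dvd_imp_le \<open>i dvd r\<close> by blast
      then show False using h(2) by simp
    qed
    then show "g \<in> H" using h hc by simp
  qed
  show ?thesis using HK KH unfolding H_def S_def c_def by blast
qed

end


context phi_setup
begin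

lemma rk_le3:
  assumes i: "i \<ge> 1"
  shows "rk (PI\<lparr>carrier := phi_kernel PI \<phi> i\<rparr>) \<le> 3"
proof -
  interpret P: group PI by (rule group_PI)
  define S where "S = {gt [^]\<^bsub>PI\<^esub> i, ga, P.cjg gt (i - 1) gb}"
  have "S \<subseteq> generate PI S" by (auto intro: generate.incl)
  then have SK: "S \<subseteq> phi_kernel PI \<phi> i" using gen_kernel[OF i] unfolding S_def by simp
  have g: "generate (PI\<lparr>carrier := phi_kernel PI \<phi> i\<rparr>) S = phi_kernel PI \<phi> i"
    using P.generate_consistent[OF SK K_subgroup] gen_kernel[OF i] unfolding S_def by simp
  have fS: "finite S" unfolding S_def by simp
  have ci: "card (insert x A) \<le> Suc (card A)" if "finite A" for x :: "pi_gen word set" and A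
    using that by (simp add: card_insert_if)
  have c: "card S \<le> 3" unfolding S_def
    using ci[of "{ga, P.cjg gt (i - 1) gb}" "gt [^]\<^bsub>PI\<^esub> i"] ci[of "{P.cjg gt (i - 1) gb}" ga] by simp
  have ex: "\<exists>S'. finite S' \<and> card S' = card S \<and> S' \<subseteq> carrier (PI\<lparr>carrier := phi_kernel PI \<phi> i\<rparr>)
      \<and> generate (PI\<lparr>carrier := phi_kernel PI \<phi> i\<rparr>) S' = carrier (PI\<lparr>carrier := phi_kernel PI \<phi> i\<rparr>)"
    using fS SK g by (intro exI[of _ S]) simp
  have "rk (PI\<lparr>carrier := phi_kernel PI \<phi> i\<rparr>) \<le> card S"
    unfolding rk_def by (rule Least_le[where P="\<lambda>n. \<exists>S. finite S \<and> card S = n \<and> S \<subseteq> carrier (PI\<lparr>carrier := phi_kernel PI \<phi> i\<rparr>) \<and> generate (PI\<lparr>carrier := phi_kernel PI \<phi> i\<rparr>) S = carrier (PI\<lparr>carrier := phi_kernel PI \<phi> i\<rparr>)", OF ex])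
  then show ?thesis using c by simp
qed

lemma index_ge:
  assumes i: "i \<ge> 1"
  shows "card (rcosets\<^bsub>PI\<^esub> (phi_kernel PI \<phi> i)) = 0 \<or> i \<le> card (rcosets\<^bsub>PI\<^esub> (phi_kernel PI \<phi> i))"
proof (cases "finite (rcosets\<^bsub>PI\<^esub> (phi_kernel PI \<phi> i))")
  case False then show ?thesis by simp
next
  case True
  interpret P: group PI by (rule group_PI)
  let ?K = "phi_kernel PI \<phi> i"
  define f where "f j = ?K #>\<^bsub>PI\<^esub> (gt [^]\<^bsub>PI\<^esub> (j::nat))" for j
  have fin: "f ` {0..<i} \<subseteq> rcosets\<^bsub>PI\<^esub> ?K"
    using P.nat_pow_closed[OF PI_gens(1)] unfolding f_def RCOSETS_def by blast
  have inj: "inj_on f {0..<i}"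
  proof (rule inj_onI)
    fix j j' assume j: "j \<in> {0..<i}" "j' \<in> {0..<i}" and e: "f j = f j'"
    have "gt [^]\<^bsub>PI\<^esub> j \<in> f j" unfolding f_def by (rule P.rcos_self[OF _ K_subgroup]) simp
    then have "gt [^]\<^bsub>PI\<^esub> j \<in> f j'" using e by simp
    then obtain k where k: "k \<in> ?K" "gt [^]\<^bsub>PI\<^esub> j = k \<otimes>\<^bsub>PI\<^esub> gt [^]\<^bsub>PI\<^esub> j'"
      unfolding f_def r_coset_def by auto
    have kc: "k \<in> carrier PI" using k(1) unfolding phi_kernel_def by auto
    have "int j = \<phi> k + int j'" using arg_cong[OF k(2), of \<phi>] kc by (simp add: phi_mult phi_pow phiT)
    moreover have "int i dvd \<phi> k" using k(1) unfolding phi_kernel_def by (simp add: dvd_eq_mod_eq_0)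
    ultimately have "int i dvd int j - int j'" by simp
    then show "j = j'"
    proof (rule contrapos_pp)
      assume ne: "j \<noteq> j'"
      have lt: "\<bar>int j - int j'\<bar> < int i" using j by auto
      show "\<not> int i dvd int j - int j'"
      proof
        assume "int i dvd int j - int j'"
        then have "\<bar>int i\<bar> \<le> \<bar>int j - int j'\<bar>" by (rule dvd_imp_le_int[rotated]) (use ne in simp)
        then show False using lt by simp
      qed
    qed
  qed
  have "card (f ` {0..<i}) = i" using card_image[OF inj] by simp
  then have "i \<le> card (rcosets\<^bsub>PI\<^esub> ?K)" using card_mono[OF True fin] by simp
  then show ?thesis by simp
qed

lemma part1: "rank_gradient pi_group \<phi> = 0"
proof -
  define f where "f i = real (rk (PI\<lparr>carrier := phi_kernel PI \<phi> i\<rparr>)) / real (card (rcosets\<^bsub>PI\<^esub> (phi_kernel PI \<phi> i)))" for i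
  have bnd: "f i \<le> 3 / real i" if "i \<ge> 1" for i
  proof -
    have r: "real (rk (PI\<lparr>carrier := phi_kernel PI \<phi> i\<rparr>)) \<le> 3" using rk_le3[OF that] by simp
    show ?thesis
    proof (cases "card (rcosets\<^bsub>PI\<^esub> (phi_kernel PI \<phi> i)) = 0")
      case True then show ?thesis unfolding f_def by simp
    next
      case False
      then have c: "real i \<le> real (card (rcosets\<^bsub>PI\<^esub> (phi_kernel PI \<phi> i)))" using index_ge[OF that] by simp
      have "f i \<le> 3 / real (card (rcosets\<^bsub>PI\<^esub> (phi_kernel PI \<phi> i)))"
        unfolding f_def using r False by (simp add: divide_right_mono)
      also have "\<dots> \<le> 3 / real i" using c that by (simp add: frac_le)
      finally show ?thesis .
    qed
  qed
  have nn: "f i \<ge> 0" for i unfolding f_def by simp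
  have "f \<longlonglongrightarrow> 0"
  proof (rule real_tendsto_sandwich[where f="\<lambda>_. 0" and g=f and h="\<lambda>i. 3 / real i"])
    show "\<forall>\<^sub>F n in sequentially. 0 \<le> f n" using nn by simp
    show "\<forall>\<^sub>F n in sequentially. f n \<le> 3 / real n"
      using bnd by (auto simp: eventually_sequentially)
    show "(\<lambda>n. 3 / real n) \<longlonglongrightarrow> 0" by (rule lim_const_over_n)
  qed simp
  then have "(\<lambda>i. ereal (f i)) \<longlonglongrightarrow> ereal 0" by (rule tendsto_ereal)
  then have "liminf (\<lambda>i. ereal (f i)) = ereal 0" by (rule lim_imp_Liminf[rotated]) simp
  then show ?thesis unfolding rank_gradient_def f_def by (simp add: zero_ereal_def)
qed

end


theorem proposition4p2:
  fixes \<phi> :: "pi_gen word set \<Rightarrow> int"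
  assumes "\<phi> \<in> hom pi_group integer_group"
    and "\<phi> (pres_gen pi_rels T) = 1"
    and "\<phi> (pres_gen pi_rels A) = 0"
    and "\<phi> (pres_gen pi_rels B) = 0"
  shows "rank_gradient pi_group \<phi> = 0
    \<and> \<not> (\<exists>(Bg :: 'b monoid) Ap Am \<theta> \<psi>.
            group Bg \<and> fin_gen Bg
          \<and> subgroup Ap Bg \<and> subgroup Am Bg
          \<and> \<theta> \<in> iso (Bg\<lparr>carrier := Ap\<rparr>) (Bg\<lparr>carrier := Am\<rparr>)
          \<and> (Ap = carrier Bg \<or> Am = carrier Bg)
          \<and> \<psi> \<in> iso (HNN Bg Ap \<theta>) pi_group
          \<and> \<phi> (\<psi> (HNN_stable Bg Ap \<theta>)) = 1
          \<and> (\<forall>x \<in> carrier Bg. \<phi> (\<psi> (HNN_base Bg Ap \<theta> x)) = 0))"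
proof -
  have ps: "phi_setup \<phi>" using assms by (simp add: phi_setup_def)
  have p1: "rank_gradient pi_group \<phi> = 0" by (rule phi_setup.part1[OF ps])
  have p2: "\<not> (\<exists>(Bg :: 'b monoid) Ap Am \<theta> \<psi>.
            group Bg \<and> fin_gen Bg
          \<and> subgroup Ap Bg \<and> subgroup Am Bg
          \<and> \<theta> \<in> iso (Bg\<lparr>carrier := Ap\<rparr>) (Bg\<lparr>carrier := Am\<rparr>)
          \<and> (Ap = carrier Bg \<or> Am = carrier Bg)
          \<and> \<psi> \<in> iso (HNN Bg Ap \<theta>) pi_group
          \<and> \<phi> (\<psi> (HNN_stable Bg Ap \<theta>)) = 1
          \<and> (\<forall>x \<in> carrier Bg. \<phi> (\<psi> (HNN_base Bg Ap \<theta> x)) = 0))"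
  proof
    assume "\<exists>(Bg :: 'b monoid) Ap Am \<theta> \<psi>.
            group Bg \<and> fin_gen Bg
          \<and> subgroup Ap Bg \<and> subgroup Am Bg
          \<and> \<theta> \<in> iso (Bg\<lparr>carrier := Ap\<rparr>) (Bg\<lparr>carrier := Am\<rparr>)
          \<and> (Ap = carrier Bg \<or> Am = carrier Bg)
          \<and> \<psi> \<in> iso (HNN Bg Ap \<theta>) pi_group
          \<and> \<phi> (\<psi> (HNN_stable Bg Ap \<theta>)) = 1
          \<and> (\<forall>x \<in> carrier Bg. \<phi> (\<psi> (HNN_base Bg Ap \<theta> x)) = 0)"
    then obtain Bg :: "'b monoid" and Ap Am \<theta> \<psi> where
      h: "group Bg" "fin_gen Bg" "subgroup Ap Bg" "subgroup Am Bg"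
         "\<theta> \<in> iso (Bg\<lparr>carrier := Ap\<rparr>) (Bg\<lparr>carrier := Am\<rparr>)"
         "Ap = carrier Bg \<or> Am = carrier Bg"
         "\<psi> \<in> iso (HNN Bg Ap \<theta>) pi_group"
         "\<phi> (\<psi> (HNN_stable Bg Ap \<theta>)) = 1"
         "\<forall>x \<in> carrier Bg. \<phi> (\<psi> (HNN_base Bg Ap \<theta> x)) = 0"
      by blast
    show False by (rule part2[OF ps h])
  qed
  show ?thesis using p1 p2 by blast
qed

end
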